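(* Let $N=\begin{pmatrix}0&1&0\\0&0&1\\0&0&0\end{pmatrix}$, $\xi=(x,y,z)^T$, $\beta=2zx-y^2$, and $d\ge1$. The space $\ker(\mathrm{ad}_{N^*})\cap V^3_d$ (the orthogonal complement of $\mathrm{rng}\,\mathrm{ad}_N$ in $F^3_d$, intersected with $V^3_d$) consists exactly of the vector fields $$h=\begin{pmatrix}x^2\psi_1\\ xy\,\psi_1+x\psi_2\\ \tfrac12 y^2\psi_1+y\psi_2+\psi_3\end{pmatrix},$$ where $\psi_i=\psi_i(x,\beta)$ are polynomials in the two quantities $x$ and $\beta$ (so that $\psi_1,\psi_2,\psi_3$ are homogeneous in $\xi$ of degrees $d-2,d-1,d$ respectively) and $\psi_3$ satisfies $$-2\,\partial_\beta\psi_3=x\,\partial_x\psi_1+3\psi_1+\beta\,\partial_\beta\psi_1,$$ the partial derivatives being taken with respect to the two arguments $(x,\beta)$. The dimension of this space is $d+1$.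
   Context: $F^3_d$ is the space of vector fields on $\mathbb{R}^3$ with components real homogeneous polynomials of degree $d$, $V^3_d=\{v\in F^3_d:\nabla\cdot v=0\}$. $\mathrm{ad}_A h(\xi)=Dh(\xi)A\xi-Ah(\xi)$, $N^*=N^T$. The inner product on $F^3_d$ is $\langle p,q\rangle=\sum_i p_i(\partial_\xi)q_i(\xi)|_{\xi=0}$; with respect to it the adjoint of $\mathrm{ad}_N$ is $\mathrm{ad}_{N^*}$, so $\ker\mathrm{ad}_{N^*}$ is the orthogonal complement (cokernel) of $\mathrm{rng}\,\mathrm{ad}_N$. *)

theory Defs
  imports "HOL-Analysis.Analysis" "HOL-Library.Function_Algebras"
begin

type_synonym vec3 = "real ^ 3"
type_synonym vfield = "vec3 \<Rightarrow> vec3"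

text \<open>Homogeneous polynomial function of degree d on R^3 (coordinates x = xi$1, y = xi$2, z = xi$3).\<close>
definition hom_poly3 :: "nat \<Rightarrow> (vec3 \<Rightarrow> real) \<Rightarrow> bool" where
  "hom_poly3 d f \<longleftrightarrow> (\<exists>c :: nat \<Rightarrow> nat \<Rightarrow> real. \<forall>\<xi>.
     f \<xi> = (\<Sum>i\<le>d. \<Sum>j\<le>d - i. c i j * (\<xi>$1)^i * (\<xi>$2)^j * (\<xi>$3)^(d - i - j)))"

definition F3 :: "nat \<Rightarrow> vfield set" where
  "F3 d = {h. \<forall>i. hom_poly3 d (\<lambda>\<xi>. h \<xi> $ i)}"

definition Dfield :: "vfield \<Rightarrow> vec3 \<Rightarrow> vec3 \<Rightarrow> vec3" where
  "Dfield h \<xi> v = (\<chi> i. deriv (\<lambda>t. h (\<xi> + t *\<^sub>R v) $ i) 0)"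

definition divergence :: "vfield \<Rightarrow> vec3 \<Rightarrow> real" where
  "divergence h \<xi> = (\<Sum>i\<in>UNIV. deriv (\<lambda>t. h (\<xi> + t *\<^sub>R axis i 1) $ i) 0)"

definition V3 :: "nat \<Rightarrow> vfield set" where
  "V3 d = {h \<in> F3 d. \<forall>\<xi>. divergence h \<xi> = 0}"

definition ad :: "real^3^3 \<Rightarrow> vfield \<Rightarrow> vfield" where
  "ad A h = (\<lambda>\<xi>. Dfield h \<xi> (A *v \<xi>) - A *v h \<xi>)"

definition Nmat :: "real^3^3" where
  "Nmat = vector [vector [0, 1, 0], vector [0, 0, 1], vector [0, 0, 0]]"

text \<open>Polynomial in (x, beta) that is homogeneous of degree m in xi, where x has weight 1 and
  beta = 2zx - y^2 has weight 2; for m < 0 this is the zero polynomial.\<close>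
definition whom_poly :: "int \<Rightarrow> (real \<Rightarrow> real \<Rightarrow> real) \<Rightarrow> bool" where
  "whom_poly m \<psi> \<longleftrightarrow> (\<exists>c :: nat \<Rightarrow> real. \<forall>x b.
     \<psi> x b = (\<Sum>k\<in>{k. 2 * int k \<le> m}. c k * x ^ nat (m - 2 * int k) * b ^ k))"

definition beta :: "vec3 \<Rightarrow> real" where
  "beta \<xi> = 2 * (\<xi>$3) * (\<xi>$1) - (\<xi>$2)^2"

definition fscale :: "real \<Rightarrow> vfield \<Rightarrow> vfield" where
  "fscale c h = (\<lambda>\<xi>. c *\<^sub>R h \<xi>)"

end

theory Submission
  imports Defs "HOL-Analysis.Poly_Roots"
begin

inductive hp :: "nat \<Rightarrow> (vec3 \<Rightarrow> real) \<Rightarrow> bool" where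
  hp_mono: "a + b + c = d \<Longrightarrow> hp d (\<lambda>\<xi>. (\<xi>$1)^a * (\<xi>$2)^b * (\<xi>$3)^c)"
| hp_zero: "hp d (\<lambda>_. 0)"
| hp_add: "hp d f \<Longrightarrow> hp d g \<Longrightarrow> hp d (\<lambda>\<xi>. f \<xi> + g \<xi>)"
| hp_smul: "hp d f \<Longrightarrow> hp d (\<lambda>\<xi>. r * f \<xi>)"

lemma hom_poly3_mono:
  assumes "a + b + c = d"
  shows "hom_poly3 d (\<lambda>\<xi>. (\<xi>$1)^a * (\<xi>$2)^b * (\<xi>$3)^c)"
  unfolding hom_poly3_def
proof (rule exI[of _ "\<lambda>i j. if i = a \<and> j = b then 1 else 0"], intro allI)
  fix \<xi> :: vec3
  have "(\<Sum>i\<le>d. \<Sum>j\<le>d - i. (if i = a \<and> j = b then 1 else 0) * (\<xi>$1)^i * (\<xi>$2)^j * (\<xi>$3)^(d - i - j))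
      = (\<Sum>i\<le>d. \<Sum>j\<le>d - i. (if i = a \<and> j = b then (\<xi>$1)^a * (\<xi>$2)^b * (\<xi>$3)^(d - a - b) else 0))"
    by (intro sum.cong refl) auto
  also have "\<dots> = (\<Sum>i\<le>d. if i = a then (\<xi>$1)^a * (\<xi>$2)^b * (\<xi>$3)^(d - a - b) else 0)"
    using assms by (intro sum.cong refl) (auto simp: sum.delta)
  also have "\<dots> = (\<xi>$1)^a * (\<xi>$2)^b * (\<xi>$3)^c"
  proof -
    have "d - a - b = c" using assms by simp
    then show ?thesis using assms by (simp add: sum.delta)
  qed
  finally show "(\<xi>$1)^a * (\<xi>$2)^b * (\<xi>$3)^c = (\<Sum>i\<le>d. \<Sum>j\<le>d - i. (if i = a \<and> j = b then 1 else 0) * (\<xi>$1)^i * (\<xi>$2)^j * (\<xi>$3)^(d - i - j))"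
    by simp
qed

lemma hom_poly3_add:
  assumes "hom_poly3 d f" "hom_poly3 d g" shows "hom_poly3 d (\<lambda>\<xi>. f \<xi> + g \<xi>)"
proof -
  obtain c1 where c1: "\<forall>\<xi>. f \<xi> = (\<Sum>i\<le>d. \<Sum>j\<le>d - i. c1 i j * (\<xi>$1)^i * (\<xi>$2)^j * (\<xi>$3)^(d - i - j))"
    using assms(1) unfolding hom_poly3_def by blast
  obtain c2 where c2: "\<forall>\<xi>. g \<xi> = (\<Sum>i\<le>d. \<Sum>j\<le>d - i. c2 i j * (\<xi>$1)^i * (\<xi>$2)^j * (\<xi>$3)^(d - i - j))"
    using assms(2) unfolding hom_poly3_def by blast
  show ?thesis unfolding hom_poly3_def
    by (rule exI[of _ "\<lambda>i j. c1 i j + c2 i j"]) (simp add: c1 c2 sum.distrib[symmetric] algebra_simps)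
qed

lemma hom_poly3_smul:
  assumes "hom_poly3 d f" shows "hom_poly3 d (\<lambda>\<xi>. r * f \<xi>)"
proof -
  obtain c1 where c1: "\<forall>\<xi>. f \<xi> = (\<Sum>i\<le>d. \<Sum>j\<le>d - i. c1 i j * (\<xi>$1)^i * (\<xi>$2)^j * (\<xi>$3)^(d - i - j))"
    using assms(1) unfolding hom_poly3_def by blast
  show ?thesis unfolding hom_poly3_def
    by (rule exI[of _ "\<lambda>i j. r * c1 i j"]) (simp add: c1 sum_distrib_left algebra_simps)
qed

lemma hp_hom: "hp d f \<Longrightarrow> hom_poly3 d f"
proof (induction rule: hp.induct)
  case (hp_mono a b c d) then show ?case by (rule hom_poly3_mono)
next
  case (hp_zero d) then show ?case unfolding hom_poly3_def by (rule_tac x="\<lambda>i j. 0" in exI) simp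
next
  case (hp_add d f g) show ?case by (rule hom_poly3_add[OF hp_add.IH])
next
  case (hp_smul d f r) show ?case by (rule hom_poly3_smul[OF hp_smul.IH])
qed

lemma hp_mult_mono:
  assumes "hp q g"
  shows "hp (a + b + c + q) (\<lambda>\<xi>. (\<xi>$1)^a * (\<xi>$2)^b * (\<xi>$3)^c * g \<xi>)"
  using assms
proof (induction rule: hp.induct)
  case (hp_mono a' b' c' d)
  have "hp (a + b + c + d) (\<lambda>\<xi>. (\<xi>$1)^(a+a') * (\<xi>$2)^(b+b') * (\<xi>$3)^(c+c'))"
    by (rule hp.hp_mono) (use hp_mono in simp)
  then show ?case by (simp add: power_add algebra_simps)
next
  case (hp_zero d) then show ?case using hp.hp_zero by simp
next
  case (hp_add d f g)
  then show ?case using hp.hp_add[OF hp_add.IH] by (simp add: algebra_simps)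
next
  case (hp_smul d f r)
  then show ?case using hp.hp_smul[OF hp_smul.IH, of r] by (simp add: algebra_simps)
qed

lemma hp_mult:
  assumes "hp p f" "hp q g"
  shows "hp (p + q) (\<lambda>\<xi>. f \<xi> * g \<xi>)"
  using assms(1)
proof (induction rule: hp.induct)
  case (hp_mono a b c d)
  then show ?case using hp_mult_mono[OF assms(2), of a b c] by simp
next
  case (hp_zero d) then show ?case using hp.hp_zero by simp
next
  case (hp_add d f1 f2)
  then show ?case using hp.hp_add[OF hp_add.IH] by (simp add: algebra_simps)
next
  case (hp_smul d f r)
  then show ?case using hp.hp_smul[OF hp_smul.IH, of r] by (simp add: algebra_simps)
qed

lemma hp_sum: "finite K \<Longrightarrow> (\<And>k. k \<in> K \<Longrightarrow> hp d (f k)) \<Longrightarrow> hp d (\<lambda>\<xi>. \<Sum>k\<in>K. f k \<xi>)"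
proof (induction K rule: finite_induct)
  case empty then show ?case using hp_zero by simp
next
  case (insert x F) then show ?case using hp_add[of d "f x" "\<lambda>\<xi>. \<Sum>k\<in>F. f k \<xi>"] by simp
qed

lemma hp_x: "hp 1 (\<lambda>\<xi>. \<xi>$1)" using hp_mono[of 1 0 0 1] by simp
lemma hp_y: "hp 1 (\<lambda>\<xi>. \<xi>$2)" using hp_mono[of 0 1 0 1] by simp
lemma hp_one: "hp 0 (\<lambda>\<xi>. 1)" using hp_mono[of 0 0 0 0] by simp

lemma hp_beta: "hp 2 beta"
proof -
  have "hp 2 (\<lambda>\<xi>. 2 * ((\<xi>$1)^1 * (\<xi>$2)^0 * (\<xi>$3)^1) + (-1) * ((\<xi>$1)^0 * (\<xi>$2)^2 * (\<xi>$3)^0))"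
    by (intro hp_add hp_smul hp_mono) auto
  then show ?thesis unfolding beta_def by (simp add: algebra_simps)
qed

lemma hp_pow: "hp p f \<Longrightarrow> hp (p * k) (\<lambda>\<xi>. (f \<xi>)^k)"
proof (induction k)
  case 0 then show ?case using hp_one by simp
next
  case (Suc k) then show ?case using hp_mult[of p f "p*k" "\<lambda>\<xi>. (f \<xi>)^k"] by (simp add: algebra_simps)
qed


lemma vnth_diff: "(\<lambda>\<xi>::vec3. \<xi>$i) differentiable (at \<xi>)"
  by (rule bounded_linear_imp_differentiable[OF bounded_linear_vec_nth])

lemma hom_poly3_differentiable:
  assumes "hom_poly3 d f" shows "f differentiable (at \<xi>)"
proof -
  obtain c where c: "\<forall>\<xi>. f \<xi> = (\<Sum>i\<le>d. \<Sum>j\<le>d - i. c i j * (\<xi>$1)^i * (\<xi>$2)^j * (\<xi>$3)^(d - i - j))"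
    using assms unfolding hom_poly3_def by blast
  have "f = (\<lambda>\<xi>. \<Sum>i\<le>d. \<Sum>j\<le>d - i. c i j * (\<xi>$1)^i * (\<xi>$2)^j * (\<xi>$3)^(d - i - j))"
    using c by auto
  moreover have "(\<lambda>\<xi>. \<Sum>i\<le>d. \<Sum>j\<le>d - i. c i j * (\<xi>$1)^i * (\<xi>$2)^j * (\<xi>$3)^(d - i - j)) differentiable (at \<xi>)"
    by (auto intro!: differentiable_sum differentiable_mult differentiable_power differentiable_const vnth_diff)
  ultimately show ?thesis by simp
qed

lemma hom_poly3_has_derivative:
  assumes "hom_poly3 d f" shows "(f has_derivative frechet_derivative f (at \<xi>)) (at \<xi>)"
  using hom_poly3_differentiable[OF assms] frechet_derivative_works by blast

lemma hom_poly3_continuous: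
  assumes "hom_poly3 d f" shows "continuous (at \<xi>) f"
  using hom_poly3_differentiable[OF assms] differentiable_imp_continuous_within by blast

lemma curve_deriv:
  fixes f :: "vec3 \<Rightarrow> real"
  assumes "(f has_derivative F) (at (p t))" "(p has_vector_derivative p') (at t)"
  shows "((\<lambda>s. f (p s)) has_real_derivative F p') (at t)"
proof -
  have lin: "linear F" using assms(1) has_derivative_linear by blast
  have "((\<lambda>s. f (p s)) has_derivative (\<lambda>s. F (s *\<^sub>R p'))) (at t)"
    using has_derivative_compose[OF assms(2)[unfolded has_vector_derivative_def] assms(1)] by simp
  moreover have "(\<lambda>s. F (s *\<^sub>R p')) = (*) (F p')"
    using lin by (auto simp: linear_scale mult.commute)
  ultimately show ?thesis unfolding has_field_derivative_def by (simp only:)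
qed

lemma dir_deriv:
  fixes f :: "vec3 \<Rightarrow> real"
  assumes "(f has_derivative F) (at \<xi>)"
  shows "deriv (\<lambda>t. f (\<xi> + t *\<^sub>R v)) 0 = F v"
proof -
  have "((\<lambda>t. \<xi> + t *\<^sub>R v) has_vector_derivative v) (at 0)"
    by (auto intro!: derivative_eq_intros)
  then have "((\<lambda>t. f (\<xi> + t *\<^sub>R v)) has_real_derivative F v) (at 0)"
    using curve_deriv[of f F "\<lambda>t. \<xi> + t *\<^sub>R v" 0 v] assms by simp
  then show ?thesis by (rule DERIV_imp_deriv)
qed

lemma Tmul: "transpose Nmat *v v = vector [0, v$1, v$2]"
  by (simp add: vec_eq_iff forall_3 matrix_vector_mult_def sum_3 transpose_def Nmat_def)

lemma ad_zero_D:
  assumes "ad (transpose Nmat) h = (\<lambda>_. 0)"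
  shows "Dfield h \<xi> (vector [0, \<xi>$1, \<xi>$2]) = vector [0, h \<xi> $1, h \<xi> $2]"
proof -
  have "ad (transpose Nmat) h \<xi> = 0" using fun_cong[OF assms, of \<xi>] by simp
  then have "Dfield h \<xi> (transpose Nmat *v \<xi>) - transpose Nmat *v h \<xi> = 0" unfolding ad_def .
  then show ?thesis unfolding Tmul by (simp only: right_minus_eq)
qed


definition pflow :: "vec3 \<Rightarrow> real \<Rightarrow> vec3" where
  "pflow \<xi> t = vector [\<xi>$1, \<xi>$2 + t * \<xi>$1, \<xi>$3 + t * \<xi>$2 + t^2/2 * \<xi>$1]"

lemma pflow_alt: "pflow \<xi> t = \<xi> + t *\<^sub>R vector [0, \<xi>$1, \<xi>$2] + (t^2/2) *\<^sub>R vector [0, 0, \<xi>$1]"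
  by (simp add: vec_eq_iff forall_3 pflow_def algebra_simps)

lemma pflow_0: "pflow \<xi> 0 = \<xi>"
  by (simp add: vec_eq_iff forall_3 pflow_def)

lemma pflow_vd: "(pflow \<xi> has_vector_derivative vector [0, (pflow \<xi> t)$1, (pflow \<xi> t)$2]) (at t)"
proof -
  have "((\<lambda>t. \<xi> + t *\<^sub>R vector [0, \<xi>$1, \<xi>$2] + (t^2/2) *\<^sub>R vector [0, 0, \<xi>$1]) has_vector_derivative
        (vector [0, \<xi>$1, \<xi>$2] + t *\<^sub>R vector [0, 0, \<xi>$1])) (at t)"
    by (auto intro!: derivative_eq_intros simp: field_simps)
  moreover have "vector [0, \<xi>$1, \<xi>$2] + t *\<^sub>R vector [0, 0, \<xi>$1] = (vector [0, (pflow \<xi> t)$1, (pflow \<xi> t)$2] :: vec3)"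
    unfolding vec_eq_iff forall_3 by (simp add: pflow_def)
  ultimately show ?thesis unfolding pflow_alt[abs_def] by simp
qed

lemma F3_comp: "h \<in> F3 d \<Longrightarrow> hom_poly3 d (\<lambda>\<xi>. h \<xi> $ i)"
  unfolding F3_def by blast

lemma Dfield_comp:
  assumes "h \<in> F3 d"
  shows "Dfield h \<xi> v $ i = frechet_derivative (\<lambda>\<xi>. h \<xi> $ i) (at \<xi>) v"
  unfolding Dfield_def using dir_deriv[OF hom_poly3_has_derivative[OF F3_comp[OF assms]]] by simp

lemma flow_deriv:
  assumes "h \<in> F3 d" "ad (transpose Nmat) h = (\<lambda>_. 0)"
  shows "((\<lambda>s. h (pflow \<xi> s) $ i) has_real_derivative (vector [0, h (pflow \<xi> t) $1, h (pflow \<xi> t) $2] :: vec3) $ i) (at t)"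
proof -
  have "((\<lambda>s. h (pflow \<xi> s) $ i) has_real_derivative
      frechet_derivative (\<lambda>\<xi>. h \<xi> $ i) (at (pflow \<xi> t)) (vector [0, (pflow \<xi> t)$1, (pflow \<xi> t)$2])) (at t)"
    by (rule curve_deriv[OF hom_poly3_has_derivative[OF F3_comp[OF assms(1)]] pflow_vd])
  also have "frechet_derivative (\<lambda>\<xi>. h \<xi> $ i) (at (pflow \<xi> t)) (vector [0, (pflow \<xi> t)$1, (pflow \<xi> t)$2])
      = Dfield h (pflow \<xi> t) (vector [0, (pflow \<xi> t)$1, (pflow \<xi> t)$2]) $ i"
    using Dfield_comp[OF assms(1)] by simp
  also have "\<dots> = (vector [0, h (pflow \<xi> t) $1, h (pflow \<xi> t) $2] :: vec3) $ i"
    using ad_zero_D[OF assms(2)] by simp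
  finally show ?thesis .
qed

lemma flow:
  assumes "h \<in> F3 d" "ad (transpose Nmat) h = (\<lambda>_. 0)"
  shows "h (pflow \<xi> t) $ 1 = h \<xi> $ 1"
    and "h (pflow \<xi> t) $ 2 = h \<xi> $ 2 + t * h \<xi> $ 1"
    and "h (pflow \<xi> t) $ 3 = h \<xi> $ 3 + t * h \<xi> $ 2 + t^2/2 * h \<xi> $ 1"
proof -
  note D = flow_deriv[OF assms, of \<xi>]
  have d1: "\<And>t. ((\<lambda>s. h (pflow \<xi> s) $ 1) has_real_derivative 0) (at t)"
    using D[of 1] by simp
  show c1: "h (pflow \<xi> t) $ 1 = h \<xi> $ 1"
    using DERIV_isconst_all[of "\<lambda>s. h (pflow \<xi> s) $ 1" t 0] d1 by (simp add: pflow_0)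
  have d2: "\<And>t. ((\<lambda>s. h (pflow \<xi> s) $ 2 - s * h \<xi> $ 1) has_real_derivative 0) (at t)"
  proof -
    fix t
    have "((\<lambda>s. h (pflow \<xi> s) $ 2 - s * h \<xi> $ 1) has_real_derivative (h (pflow \<xi> t) $ 1 - 1 * h \<xi> $ 1)) (at t)"
      using D[of 2 t] by (auto intro!: derivative_eq_intros)
    moreover have "h (pflow \<xi> t) $ 1 = h \<xi> $ 1"
      using DERIV_isconst_all[of "\<lambda>s. h (pflow \<xi> s) $ 1" t 0] d1 by (simp add: pflow_0)
    ultimately show "((\<lambda>s. h (pflow \<xi> s) $ 2 - s * h \<xi> $ 1) has_real_derivative 0) (at t)" by simp
  qed
  have c2: "\<And>t. h (pflow \<xi> t) $ 2 = h \<xi> $ 2 + t * h \<xi> $ 1"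
  proof -
    fix t
    show "h (pflow \<xi> t) $ 2 = h \<xi> $ 2 + t * h \<xi> $ 1"
      using DERIV_isconst_all[of "\<lambda>s. h (pflow \<xi> s) $ 2 - s * h \<xi> $ 1" t 0] d2 by (simp add: pflow_0)
  qed
  then show "h (pflow \<xi> t) $ 2 = h \<xi> $ 2 + t * h \<xi> $ 1" .
  have d3: "\<And>t. ((\<lambda>s. h (pflow \<xi> s) $ 3 - s * h \<xi> $ 2 - s^2/2 * h \<xi> $ 1) has_real_derivative 0) (at t)"
  proof -
    fix t
    have "((\<lambda>s. h (pflow \<xi> s) $ 3 - s * h \<xi> $ 2 - s^2/2 * h \<xi> $ 1) has_real_derivative
        (h (pflow \<xi> t) $ 2 - 1 * h \<xi> $ 2 - (2 * t / 2) * h \<xi> $ 1)) (at t)"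
      using D[of 3 t] by (auto intro!: derivative_eq_intros)
    then show "((\<lambda>s. h (pflow \<xi> s) $ 3 - s * h \<xi> $ 2 - s^2/2 * h \<xi> $ 1) has_real_derivative 0) (at t)"
      using c2[of t] by simp
  qed
  show "h (pflow \<xi> t) $ 3 = h \<xi> $ 3 + t * h \<xi> $ 2 + t^2/2 * h \<xi> $ 1"
    using DERIV_isconst_all[of "\<lambda>s. h (pflow \<xi> s) $ 3 - s * h \<xi> $ 2 - s^2/2 * h \<xi> $ 1" t 0] d3
    by (simp add: pflow_0)
qed


lemma sum_flip: "(\<Sum>i\<le>(d::nat). g i) = (\<Sum>k\<le>d. g (d - k))"
  by (rule sum.reindex_bij_witness[where i="\<lambda>i. d - i" and j="\<lambda>i. d - i"]) auto

lemma slice_y0: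
  fixes f :: "vec3 \<Rightarrow> real"
  assumes "\<forall>\<xi>. f \<xi> = (\<Sum>i\<le>d. \<Sum>j\<le>d - i. c i j * (\<xi>$1)^i * (\<xi>$2)^j * (\<xi>$3)^(d - i - j))"
  shows "f (vector [x, 0, z]) = (\<Sum>k\<le>d. c (d - k) 0 * x^(d - k) * z^k)"
proof -
  have "f (vector [x, 0, z]) = (\<Sum>i\<le>d. \<Sum>j\<le>d - i. c i j * x^i * 0^j * z^(d - i - j))"
    using assms by simp
  also have "\<dots> = (\<Sum>i\<le>d. \<Sum>j\<le>d - i. if j = 0 then c i 0 * x^i * z^(d - i) else 0)"
    by (intro sum.cong refl) (auto simp: power_0_left)
  also have "\<dots> = (\<Sum>i\<le>d. c i 0 * x^i * z^(d - i))"
    by (intro sum.cong refl) (simp add: sum.delta)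
  also have "\<dots> = (\<Sum>k\<le>d. c (d - k) 0 * x^(d - k) * z^k)"
    by (subst sum_flip) (intro sum.cong refl, simp)
  finally show ?thesis .
qed

lemma slice_z0:
  fixes f :: "vec3 \<Rightarrow> real"
  assumes "\<forall>\<xi>. f \<xi> = (\<Sum>i\<le>d. \<Sum>j\<le>d - i. c i j * (\<xi>$1)^i * (\<xi>$2)^j * (\<xi>$3)^(d - i - j))"
  shows "f (vector [x, y, 0]) = (\<Sum>k\<le>d. c (d - k) k * x^(d - k) * y^k)"
proof -
  have "f (vector [x, y, 0]) = (\<Sum>i\<le>d. \<Sum>j\<le>d - i. c i j * x^i * y^j * 0^(d - i - j))"
    using assms by simp
  also have "\<dots> = (\<Sum>i\<le>d. \<Sum>j\<le>d - i. if j = d - i then c i (d - i) * x^i * y^(d - i) else 0)"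
    by (intro sum.cong refl) (auto simp: power_0_left)
  also have "\<dots> = (\<Sum>i\<le>d. c i (d - i) * x^i * y^(d - i))"
    by (intro sum.cong refl) (simp add: sum.delta')
  also have "\<dots> = (\<Sum>k\<le>d. c (d - k) k * x^(d - k) * y^k)"
    by (subst sum_flip) (intro sum.cong refl, simp)
  finally show ?thesis .
qed

lemma coeff_ext:
  fixes a :: "'i \<Rightarrow> real"
  assumes fin: "finite K" and z: "\<And>u. u \<noteq> 0 \<Longrightarrow> (\<Sum>k\<in>K. a k * u^(e k)) = 0"
  shows "(\<Sum>k\<in>{k\<in>K. e k = n}. a k) = 0"
proof -
  define M where "M = Max (insert n (e ` K))"
  define c where "c m = (\<Sum>k\<in>{k\<in>K. e k = m}. a k)" for m
  have nM: "n \<le> M" unfolding M_def using fin by simp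
  have eKM: "e ` K \<subseteq> {..M}" unfolding M_def using fin by auto
  have eq: "(\<Sum>k\<in>K. a k * u^(e k)) = (\<Sum>m\<le>M. c m * u^m)" for u
  proof -
    have "(\<Sum>k\<in>K. a k * u^(e k)) = (\<Sum>m\<le>M. \<Sum>k\<in>{k\<in>K. e k = m}. a k * u^(e k))"
      using sum.group[OF fin _ eKM, of "\<lambda>k. a k * u^(e k)"] by simp
    also have "\<dots> = (\<Sum>m\<le>M. c m * u^m)"
      unfolding c_def sum_distrib_right by (intro sum.cong refl) auto
    finally show ?thesis .
  qed
  show ?thesis
  proof (rule ccontr)
    assume "(\<Sum>k\<in>{k\<in>K. e k = n}. a k) \<noteq> 0"
    then have "c n \<noteq> 0" unfolding c_def .
    then have "finite {u. (\<Sum>m\<le>M. c m * u^m) = 0}"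
      using nM by (intro polyfun_rootbound_finite) auto
    moreover have "{u::real. u \<noteq> 0} \<subseteq> {u. (\<Sum>m\<le>M. c m * u^m) = 0}"
      using z eq by auto
    moreover have "infinite {u::real. u \<noteq> 0}"
    proof
      assume "finite {u::real. u \<noteq> 0}"
      then have "finite (insert 0 {u::real. u \<noteq> 0})" by simp
      moreover have "insert 0 {u::real. u \<noteq> 0} = UNIV" by auto
      ultimately show False using infinite_UNIV_char_0[where 'a=real] by simp
    qed
    ultimately show False using finite_subset by blast
  qed
qed

lemma coeff_ext_inj:
  fixes a :: "'i \<Rightarrow> real"
  assumes fin: "finite K" and inj: "inj_on e K" and z: "\<And>u. u \<noteq> 0 \<Longrightarrow> (\<Sum>k\<in>K. a k * u^(e k)) = 0"
    and k: "k \<in> K"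
  shows "a k = 0"
proof -
  have "{k'\<in>K. e k' = e k} = {k}" using inj k by (auto simp: inj_on_def)
  then show ?thesis using coeff_ext[OF fin z, of "e k"] by simp
qed


locale Xel =
  fixes d :: nat and h :: vfield
  assumes hF: "h \<in> F3 d" and had: "ad (transpose Nmat) h = (\<lambda>_. 0)"
    and hdiv: "\<forall>\<xi>. divergence h \<xi> = 0" and d1: "d \<ge> 1"
begin

definition cf :: "3 \<Rightarrow> nat \<Rightarrow> nat \<Rightarrow> real" where
  "cf i = (SOME c. \<forall>\<xi>. h \<xi> $ i = (\<Sum>i'\<le>d. \<Sum>j\<le>d - i'. c i' j * (\<xi>$1)^i' * (\<xi>$2)^j * (\<xi>$3)^(d - i' - j)))"

lemma cf: "\<forall>\<xi>. h \<xi> $ i = (\<Sum>i'\<le>d. \<Sum>j\<le>d - i'. cf i i' j * (\<xi>$1)^i' * (\<xi>$2)^j * (\<xi>$3)^(d - i' - j))"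
proof -
  have "\<exists>c. \<forall>\<xi>. h \<xi> $ i = (\<Sum>i'\<le>d. \<Sum>j\<le>d - i'. c i' j * (\<xi>$1)^i' * (\<xi>$2)^j * (\<xi>$3)^(d - i' - j))"
    using F3_comp[OF hF, of i] unfolding hom_poly3_def by blast
  then show ?thesis unfolding cf_def by (rule someI_ex)
qed

definition "A k = (if k \<le> d then cf 1 (d - k) 0 else 0)"
definition "D k = (if k \<le> d then cf 2 (d - k) 0 else 0)"
definition "B k = (if k \<le> d then cf 3 (d - k) 0 else 0)"
definition "E k = cf 3 (d - k) k"

lemma sl1: "h (vector [x, 0, z]) $ 1 = (\<Sum>k\<le>d. A k * x^(d - k) * z^k)"
  using slice_y0[OF cf[of 1], of x z] by (simp add: A_def)
lemma sl2: "h (vector [x, 0, z]) $ 2 = (\<Sum>k\<le>d. D k * x^(d - k) * z^k)"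
  using slice_y0[OF cf[of 2], of x z] by (simp add: D_def)
lemma sl3: "h (vector [x, 0, z]) $ 3 = (\<Sum>k\<le>d. B k * x^(d - k) * z^k)"
  using slice_y0[OF cf[of 3], of x z] by (simp add: B_def)
lemma slz: "h (vector [x, y, 0]) $ 3 = (\<Sum>k\<le>d. E k * x^(d - k) * y^k)"
  using slice_z0[OF cf[of 3], of x y] by (simp add: E_def)

lemmas fl = flow[OF hF had]

lemma vplus1: "vector [a, b, c] + t *\<^sub>R axis 1 1 = (vector [a + t, b, c] :: vec3)"
  unfolding vec_eq_iff forall_3 by (simp add: axis_def)
lemma vplus2: "vector [a, b, c] + t *\<^sub>R axis 2 1 = (vector [a, b + t, c] :: vec3)"
  unfolding vec_eq_iff forall_3 by (simp add: axis_def)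
lemma vplus3: "vector [a, b, c] + t *\<^sub>R axis 3 1 = (vector [a, b, c + t] :: vec3)"
  unfolding vec_eq_iff forall_3 by (simp add: axis_def)

lemma pflow_vec: "pflow (vector [a, b, c]) t = vector [a, b + t * a, c + t * b + t^2/2 * a]"
  by (simp add: pflow_def)

lemma div_poly: "(\<Sum>k\<le>d. (A k * (real d - real k + 1) + (real k + 1) * B (Suc k)) * z^k) = 0"
proof -
  have dv: "divergence h (vector [1, 0, z]) = 0" using hdiv by blast
  have e1: "(\<lambda>t. h (vector [1, 0, z] + t *\<^sub>R axis 1 1) $ 1) = (\<lambda>t. \<Sum>k\<le>d. A k * (1 + t)^(d - k) * z^k)"
    by (simp only: vplus1 sl1)
  have e3: "(\<lambda>t. h (vector [1, 0, z] + t *\<^sub>R axis 3 1) $ 3) = (\<lambda>t. \<Sum>k\<le>d. B k * 1^(d - k) * (z + t)^k)"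
    by (simp add: vplus3 sl3)
  have e2: "(\<lambda>t. h (vector [1, 0, z] + t *\<^sub>R axis 2 1) $ 2) =
      (\<lambda>t. (\<Sum>k\<le>d. D k * 1^(d - k) * (z - t^2/2)^k) + t * (\<Sum>k\<le>d. A k * 1^(d - k) * (z - t^2/2)^k))"
  proof
    fix t
    have p: "pflow (vector [1, t, z]) (- t) = vector [1, 0, z - t^2/2]"
      by (simp add: pflow_vec power2_eq_square)
    have "h (vector [1, t, z]) $ 2 = h (pflow (vector [1, t, z]) (- t)) $ 2 + t * h (vector [1, t, z]) $ 1"
      using fl(2)[of "vector [1, t, z]" "- t"] by simp
    also have "h (vector [1, t, z]) $ 1 = h (pflow (vector [1, t, z]) (- t)) $ 1"
      using fl(1)[of "vector [1, t, z]" "- t"] by simp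
    finally show "h (vector [1, 0, z] + t *\<^sub>R axis 2 1) $ 2 =
      (\<Sum>k\<le>d. D k * 1^(d - k) * (z - t^2/2)^k) + t * (\<Sum>k\<le>d. A k * 1^(d - k) * (z - t^2/2)^k)"
      unfolding p by (simp add: vplus2 sl1 sl2)
  qed
  have t1: "deriv (\<lambda>t. h (vector [1, 0, z] + t *\<^sub>R axis 1 1) $ 1) 0 = (\<Sum>k\<le>d. A k * (real d - real k) * z^k)"
  proof -
    have "((\<lambda>t. \<Sum>k\<le>d. A k * (1 + t)^(d - k) * z^k) has_real_derivative
          (\<Sum>k\<le>d. A k * (real (d - k) * (1 + 0)^(d - k - 1) * (0 + 1)) * z^k)) (at 0)"
      apply (rule derivative_eq_intros refl | simp)+
      apply (simp add: algebra_simps)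
      done
    then have "deriv (\<lambda>t. \<Sum>k\<le>d. A k * (1 + t)^(d - k) * z^k) 0 = (\<Sum>k\<le>d. A k * (real (d - k) * (1 + 0)^(d - k - 1) * (0 + 1)) * z^k)"
      by (rule DERIV_imp_deriv)
    moreover have "(\<Sum>k\<le>d. A k * (real (d - k) * (1 + 0)^(d - k - 1) * (0 + 1)) * z^k) = (\<Sum>k\<le>d. A k * (real d - real k) * z^k)"
      by (intro sum.cong refl) (simp add: of_nat_diff)
    ultimately show ?thesis unfolding e1 by simp
  qed
  have t3: "deriv (\<lambda>t. h (vector [1, 0, z] + t *\<^sub>R axis 3 1) $ 3) 0 = (\<Sum>k\<le>d. B k * real k * z^(k - 1))"
  proof -
    have "((\<lambda>t. \<Sum>k\<le>d. B k * 1^(d - k) * (z + t)^k) has_real_derivative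
          (\<Sum>k\<le>d. B k * 1^(d - k) * (real k * (z + 0)^(k - 1) * (0 + 1)))) (at 0)"
      apply (rule derivative_eq_intros refl | simp)+
      apply (simp add: algebra_simps)
      done
    then show ?thesis unfolding e3 by (auto dest!: DERIV_imp_deriv intro!: sum.cong)
  qed
  have t2: "deriv (\<lambda>t. h (vector [1, 0, z] + t *\<^sub>R axis 2 1) $ 2) 0 = (\<Sum>k\<le>d. A k * z^k)"
  proof -
    have "((\<lambda>t. (\<Sum>k\<le>d. D k * 1^(d - k) * (z - t^2/2)^k) + t * (\<Sum>k\<le>d. A k * 1^(d - k) * (z - t^2/2)^k))
       has_real_derivative
          (\<Sum>k\<le>d. D k * 1^(d - k) * (real k * (z - 0^2/2)^(k - 1) * (0 - (2 * 0^1 * 1)/2))) +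
          (1 * (\<Sum>k\<le>d. A k * 1^(d - k) * (z - 0^2/2)^k) +
           0 * (\<Sum>k\<le>d. A k * 1^(d - k) * (real k * (z - 0^2/2)^(k - 1) * (0 - (2 * 0^1 * 1)/2))))) (at 0)"
      by (rule derivative_eq_intros refl | simp)+
    then show ?thesis unfolding e2 by (auto dest!: DERIV_imp_deriv)
  qed
  have "0 = (\<Sum>k\<le>d. A k * (real d - real k) * z^k) + (\<Sum>k\<le>d. A k * z^k) + (\<Sum>k\<le>d. B k * real k * z^(k - 1))"
    using dv unfolding divergence_def sum_3 t1 t2 t3 by simp
  also have "(\<Sum>k\<le>d. B k * real k * z^(k - 1)) = (\<Sum>k\<le>d. (real k + 1) * B (Suc k) * z^k)"
  proof -
    obtain d' where d': "d = Suc d'" using d1 by (cases d) auto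
    have "(\<Sum>k\<le>d. B k * real k * z^(k - 1)) = (\<Sum>k\<le>d'. B (Suc k) * real (Suc k) * z^k)"
      unfolding d' by (subst sum.atMost_Suc_shift) simp
    also have "\<dots> = (\<Sum>k\<le>d. (real k + 1) * B (Suc k) * z^k)"
    proof -
      have Bz: "B (Suc d) = 0" by (simp add: B_def)
      have "(\<Sum>k\<le>d. (real k + 1) * B (Suc k) * z^k) = (\<Sum>k\<le>d'. (real k + 1) * B (Suc k) * z^k) + (real d + 1) * B (Suc d) * z^d"
        using d' by simp
      then show ?thesis using Bz by (simp add: algebra_simps)
    qed
    finally show ?thesis .
  qed
  finally show ?thesis by (simp add: sum.distrib[symmetric] algebra_simps)
qed

lemma div_rel: "k \<le> d \<Longrightarrow> A k * (real d - real k + 1) + (real k + 1) * B (Suc k) = 0"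
  using polyfun_eq_0[of "\<lambda>k. A k * (real d - real k + 1) + (real k + 1) * B (Suc k)" d] div_poly by blast

end

lemma coeff4:
  fixes fa fb fc fd :: "nat \<Rightarrow> real"
  assumes z: "\<And>u. u \<noteq> 0 \<Longrightarrow> (\<Sum>k\<le>d. fa k * u^(ga k)) + (\<Sum>k\<le>d. fb k * u^(gb k)) +
      (\<Sum>k\<le>d. fc k * u^(gc k)) + (\<Sum>k\<le>d. fd k * u^(gd k)) = 0"
  shows "(\<Sum>k\<in>{k\<in>{..d}. ga k = n}. fa k) + (\<Sum>k\<in>{k\<in>{..d}. gb k = n}. fb k) +
      (\<Sum>k\<in>{k\<in>{..d}. gc k = n}. fc k) + (\<Sum>k\<in>{k\<in>{..d}. gd k = n}. fd k) = 0"
proof -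
  define a where "a p = (case p of (k, j) \<Rightarrow> if j = (0::nat) then fa k else if j = 1 then fb k else if j = 2 then fc k else fd k)" for p
  define e where "e p = (case p of (k, j) \<Rightarrow> if j = (0::nat) then ga k else if j = 1 then gb k else if j = 2 then gc k else gd k)" for p
  have aa: "\<And>k. a (k,0) = fa k" "\<And>k. a (k,1) = fb k" "\<And>k. a (k,2) = fc k" "\<And>k. a (k,3) = fd k"
    by (simp_all add: a_def)
  have ee: "\<And>k. e (k,0) = ga k" "\<And>k. e (k,1) = gb k" "\<And>k. e (k,2) = gc k" "\<And>k. e (k,3) = gd k"
    by (simp_all add: e_def)
  have s4: "\<And>g::nat \<Rightarrow> real. (\<Sum>j\<le>3. g j) = g 0 + g 1 + g 2 + g 3"
    by (simp add: numeral_3_eq_3 numeral_2_eq_2 atMost_Suc)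
  have split: "\<And>g::nat \<times> nat \<Rightarrow> real. (\<Sum>p\<in>{..d} \<times> {..3}. g p) = (\<Sum>k\<le>d. g (k, 0)) + (\<Sum>k\<le>d. g (k, 1)) + (\<Sum>k\<le>d. g (k, 2)) + (\<Sum>k\<le>d. g (k, 3))"
  proof -
    fix g :: "nat \<times> nat \<Rightarrow> real"
    have "(\<Sum>p\<in>{..d} \<times> {..3}. g p) = (\<Sum>k\<le>d. \<Sum>j\<le>3. g (k, j))"
      by (simp add: sum.cartesian_product)
    also have "\<dots> = (\<Sum>k\<le>d. g (k, 0) + g (k, 1) + g (k, 2) + g (k, 3))"
      by (intro sum.cong refl) (rule s4)
    also have "\<dots> = (\<Sum>k\<le>d. g (k, 0)) + (\<Sum>k\<le>d. g (k, 1)) + (\<Sum>k\<le>d. g (k, 2)) + (\<Sum>k\<le>d. g (k, 3))"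
      by (simp add: sum.distrib)
    finally show "(\<Sum>p\<in>{..d} \<times> {..3}. g p) = (\<Sum>k\<le>d. g (k, 0)) + (\<Sum>k\<le>d. g (k, 1)) + (\<Sum>k\<le>d. g (k, 2)) + (\<Sum>k\<le>d. g (k, 3))" .
  qed
  have "(\<Sum>p\<in>{p\<in>{..d} \<times> {..3}. e p = n}. a p) = 0"
  proof (rule coeff_ext)
    fix u :: real assume "u \<noteq> 0"
    then show "(\<Sum>p\<in>{..d} \<times> {..3}. a p * u ^ e p) = 0"
      unfolding split aa ee using z by simp
  qed simp
  moreover have "(\<Sum>p\<in>{p\<in>{..d} \<times> {..3}. e p = n}. a p) = (\<Sum>p\<in>{..d} \<times> {..3}. if e p = n then a p else 0)"
    by (simp add: sum.inter_filter)
  moreover have "\<dots> = (\<Sum>k\<le>d. if ga k = n then fa k else 0) + (\<Sum>k\<le>d. if gb k = n then fb k else 0) +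
      (\<Sum>k\<le>d. if gc k = n then fc k else 0) + (\<Sum>k\<le>d. if gd k = n then fd k else 0)"
    unfolding split by (simp only: aa ee)
  moreover have "\<And>f::nat\<Rightarrow>real. \<And>ee. (\<Sum>k\<in>{k\<in>{..d}. ee k = n}. f k) = (\<Sum>k\<le>d. if ee k = n then f k else 0)"
    by (rule sum.inter_filter) simp
  ultimately show ?thesis by (simp only:)
qed

context Xel begin

lemma z0_poly:
  assumes u: "u \<noteq> 0"
  shows "(\<Sum>k\<le>d. E k * u^k) + (\<Sum>k\<le>d. (- ((-1/2)^k * B k)) * u^(2*k)) +
      (\<Sum>k\<le>d. (- ((-1/2)^k * D k)) * u^(2*k+1)) + (\<Sum>k\<le>d. (- ((-1/2)^k * A k / 2)) * u^(2*k+2)) = 0"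
proof -
  define \<xi> :: vec3 where "\<xi> = vector [1/u, 1, 0]"
  have p: "pflow \<xi> (- u) = vector [1/u, 0, - u/2]"
    using u by (simp add: \<xi>_def pflow_vec power2_eq_square)
  have h3: "h \<xi> $ 3 = h (pflow \<xi> (- u)) $ 3 + u * h (pflow \<xi> (- u)) $ 2 + u^2/2 * h (pflow \<xi> (- u)) $ 1"
  proof -
    have f1: "h (pflow \<xi> (- u)) $ 1 = h \<xi> $ 1" using fl(1) .
    have f2: "h (pflow \<xi> (- u)) $ 2 = h \<xi> $ 2 - u * h \<xi> $ 1" using fl(2)[of \<xi> "-u"] by simp
    have f3: "h (pflow \<xi> (- u)) $ 3 = h \<xi> $ 3 - u * h \<xi> $ 2 + u^2/2 * h \<xi> $ 1" using fl(3)[of \<xi> "-u"] by simp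
    show ?thesis unfolding f1 f2 f3 by (simp add: algebra_simps power2_eq_square)
  qed
  have key: "\<And>C k. k \<le> d \<Longrightarrow> u^d * (C * (1/u)^(d - k) * (- u/2)^k) = C * (-1/2)^k * u^(2*k)"
  proof -
    fix C k assume k: "k \<le> d"
    have "u^d = u^k * u^(d-k)" using k by (simp add: power_add[symmetric])
    moreover have "(- u/2)^k = (-1/2)^k * u^k" by (simp add: power_mult_distrib[symmetric])
    ultimately show "u^d * (C * (1/u)^(d - k) * (- u/2)^k) = C * (-1/2)^k * u^(2*k)"
      using u by (simp add: power_one_over field_simps power_mult power2_eq_square power_mult_distrib)
  qed
  have key2: "\<And>C k. k \<le> d \<Longrightarrow> u^d * (C * (1/u)^(d - k) * 1^k) = C * u^k"
  proof -
    fix C k assume k: "k \<le> d"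
    have "u^d = u^k * u^(d-k)" using k by (simp add: power_add[symmetric])
    then show "u^d * (C * (1/u)^(d - k) * 1^k) = C * u^k"
      using u by (simp add: power_one_over field_simps)
  qed
  have P: "\<And>C. u^d * (\<Sum>k\<le>d. C k * (1/u)^(d - k) * (- u/2)^k) = (\<Sum>k\<le>d. C k * (-1/2)^k * u^(2*k))"
    unfolding sum_distrib_left by (intro sum.cong refl key) simp
  have "u^d * h \<xi> $ 3 = (\<Sum>k\<le>d. E k * u^k)"
    unfolding \<xi>_def slz sum_distrib_left by (intro sum.cong refl key2) simp
  also have "u^d * h \<xi> $ 3 = (\<Sum>k\<le>d. B k * (-1/2)^k * u^(2*k)) + u * (\<Sum>k\<le>d. D k * (-1/2)^k * u^(2*k))
       + u^2/2 * (\<Sum>k\<le>d. A k * (-1/2)^k * u^(2*k))"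
    unfolding h3 p sl1 sl2 sl3 P[symmetric] by (simp add: algebra_simps)
  finally have "(\<Sum>k\<le>d. E k * u^k) = (\<Sum>k\<le>d. B k * (-1/2)^k * u^(2*k)) + u * (\<Sum>k\<le>d. D k * (-1/2)^k * u^(2*k))
       + u^2/2 * (\<Sum>k\<le>d. A k * (-1/2)^k * u^(2*k))" ..
  then show ?thesis
    unfolding sum_distrib_left by (simp add: sum_negf power_add power2_eq_square algebra_simps sum_subtractf[symmetric])
qed

end

context Xel begin

lemmas z0c = coeff4[where fa=E and ga="\<lambda>k. k" and fb="\<lambda>k. - ((-1/2)^k * B k)" and gb="\<lambda>k. 2*k"
    and fc="\<lambda>k. - ((-1/2)^k * D k)" and gc="\<lambda>k. 2*k+1" and fd="\<lambda>k. - ((-1/2)^k * A k / 2)" and gd="\<lambda>k. 2*k+2",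
    OF z0_poly]

lemma BA:
  assumes "d < 2 * Suc m" "m \<le> d"
  shows "B (Suc m) = A m"
proof -
  have F1: "{k\<in>{..d}. k = 2 * Suc m} = {}" using assms by auto
  have F3: "{k\<in>{..d}. 2*k+1 = 2 * Suc m} = {}" by auto presburger
  have F4: "{k\<in>{..d}. 2*k+2 = 2 * Suc m} = {m}" using assms by auto
  have F2: "(\<Sum>k\<in>{k\<in>{..d}. 2*k = 2 * Suc m}. - ((-1/2)^k * B k)) = - ((-1/2)^(Suc m) * B (Suc m))"
  proof (cases "Suc m \<le> d")
    case True
    then have e: "{k\<in>{..d}. 2*k = 2 * Suc m} = {Suc m}" by auto
    show ?thesis unfolding e by simp
  next
    case False
    then have e: "{k\<in>{..d}. 2*k = 2 * Suc m} = {}" by auto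
    have "B (Suc m) = 0" using False by (simp add: B_def)
    then show ?thesis unfolding e by simp
  qed
  have "- ((-1/2)^(Suc m) * B (Suc m)) + - ((-1/2)^m * A m / 2) = 0"
    using z0c[of "2 * Suc m"] unfolding F1 F3 F4 F2 by simp
  then have "(-1/2)^m * (B (Suc m) - A m) = 0" by (simp add: algebra_simps)
  then show ?thesis by simp
qed

lemma A_van: "d < 2 * m + 2 \<Longrightarrow> A m = 0"
proof (cases "m \<le> d")
  case True
  assume a: "d < 2 * m + 2"
  have "B (Suc m) = A m" using BA[of m] a True by simp
  then have "A m * (real d - real m + 1) + (real m + 1) * A m = 0" using div_rel[OF True] by simp
  then have "A m * (real d + 2) = 0" by (simp add: algebra_simps)
  then show ?thesis by simp
next
  case False then show ?thesis by (simp add: A_def)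
qed

lemma B_van: "d < 2 * k \<Longrightarrow> B k = 0"
proof -
  assume a: "d < 2 * k"
  then obtain m where k: "k = Suc m" by (cases k) auto
  show ?thesis
  proof (cases "m \<le> d")
    case True
    then show ?thesis using BA[of m] A_van[of m] a k by simp
  next
    case False then show ?thesis using k by (simp add: B_def)
  qed
qed

lemma D_van: "d < 2 * k + 1 \<Longrightarrow> D k = 0"
proof (cases "k \<le> d")
  case True
  assume a: "d < 2 * k + 1"
  have F1: "{k'\<in>{..d}. k' = 2 * k + 1} = {}" using a by auto
  have F2: "{k'\<in>{..d}. 2*k' = 2 * k + 1} = {}" by auto presburger
  have F3: "{k'\<in>{..d}. 2*k'+1 = 2 * k + 1} = {k}" using True by auto
  have F4: "{k'\<in>{..d}. 2*k'+2 = 2 * k + 1} = {}" by auto presburger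
  have "- ((-1/2)^k * D k) = 0"
    using z0c[of "2 * k + 1"] unfolding F1 F2 F3 F4 by simp
  then show ?thesis by simp
next
  case False then show ?thesis by (simp add: D_def)
qed

end

definition Kset :: "int \<Rightarrow> nat set" where "Kset m = {k. 2 * int k \<le> m}"

definition wpoly :: "int \<Rightarrow> (nat \<Rightarrow> real) \<Rightarrow> real \<Rightarrow> real \<Rightarrow> real" where
  "wpoly m c x b = (\<Sum>k\<in>Kset m. c k * x ^ nat (m - 2 * int k) * b ^ k)"

lemma Kset_sub: "Kset m \<subseteq> {..nat m}"
  unfolding Kset_def by auto

lemma finite_Kset[simp]: "finite (Kset m)"
  using Kset_sub finite_subset by blast

lemma whom_wpoly: "whom_poly m (wpoly m c)"
  unfolding whom_poly_def wpoly_def Kset_def by blast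

lemma whom_poly_wpoly: "whom_poly m \<psi> \<Longrightarrow> \<exists>c. \<psi> = wpoly m c"
  unfolding whom_poly_def wpoly_def Kset_def by (auto intro!: ext)

lemma conv:
  fixes G :: "nat \<Rightarrow> real"
  assumes x: "x \<noteq> 0" and G: "\<And>k. d < 2*k + j \<Longrightarrow> G k = 0"
  shows "(\<Sum>k\<le>d. G k * x^(d - k) * (b / (2 * x))^k) = x^j * wpoly (int d - int j) (\<lambda>k. G k / 2^k) x b"
proof -
  have sub: "Kset (int d - int j) \<subseteq> {..d}" unfolding Kset_def by auto
  have "(\<Sum>k\<le>d. G k * x^(d - k) * (b / (2 * x))^k) = (\<Sum>k\<in>Kset (int d - int j). G k * x^(d - k) * (b / (2 * x))^k)"
  proof (rule sum.mono_neutral_right)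
    show "\<forall>k\<in>{..d} - Kset (int d - int j). G k * x ^ (d - k) * (b / (2 * x)) ^ k = 0"
      using G unfolding Kset_def by auto
  qed (use sub in auto)
  also have "\<dots> = (\<Sum>k\<in>Kset (int d - int j). x^j * (G k / 2^k * x ^ nat (int d - int j - 2 * int k) * b ^ k))"
  proof (rule sum.cong[OF refl])
    fix k assume k: "k \<in> Kset (int d - int j)"
    define n where "n = nat (int d - int j - 2 * int k)"
    have dk: "d - k = j + n + k" using k unfolding n_def Kset_def by auto
    show "G k * x^(d - k) * (b / (2 * x))^k = x^j * (G k / 2^k * x ^ nat (int d - int j - 2 * int k) * b ^ k)"
      unfolding n_def[symmetric] dk using x by (simp add: power_add power_divide power_mult_distrib field_simps)
  qed
  finally show ?thesis unfolding wpoly_def by (simp add: sum_distrib_left)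
qed

definition form :: "(real \<Rightarrow> real \<Rightarrow> real) \<Rightarrow> (real \<Rightarrow> real \<Rightarrow> real) \<Rightarrow> (real \<Rightarrow> real \<Rightarrow> real) \<Rightarrow> vec3 \<Rightarrow> vec3" where
  "form \<psi>1 \<psi>2 \<psi>3 \<xi> = vector [(\<xi>$1)^2 * \<psi>1 (\<xi>$1) (beta \<xi>),
      \<xi>$1 * \<xi>$2 * \<psi>1 (\<xi>$1) (beta \<xi>) + \<xi>$1 * \<psi>2 (\<xi>$1) (beta \<xi>),
      (1/2) * (\<xi>$2)^2 * \<psi>1 (\<xi>$1) (beta \<xi>) + \<xi>$2 * \<psi>2 (\<xi>$1) (beta \<xi>) + \<psi>3 (\<xi>$1) (beta \<xi>)]"

lemma cont_zero:
  fixes F :: "real \<Rightarrow> real"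
  assumes "continuous (at 0) F" "\<And>t. t \<noteq> 0 \<Longrightarrow> F t = 0"
  shows "F 0 = 0"
proof -
  have "(F \<longlongrightarrow> F 0) (at 0)" using assms(1) by (simp add: continuous_at)
  moreover have "(F \<longlongrightarrow> 0) (at 0)"
    by (rule tendsto_eventually) (auto simp: eventually_at_filter assms(2))
  ultimately show ?thesis by (rule LIM_unique)
qed

lemma wpoly_cont[continuous_intros]:
  assumes "continuous F X" "continuous F Y"
  shows "continuous F (\<lambda>t. wpoly m c (X t) (Y t))"
  unfolding wpoly_def by (intro continuous_intros assms)

context Xel begin

definition "\<psi>1 = wpoly (int d - 2) (\<lambda>k. A k / 2^k)"
definition "\<psi>2 = wpoly (int d - 1) (\<lambda>k. D k / 2^k)"
definition "\<psi>3 = wpoly (int d) (\<lambda>k. B k / 2^k)"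

lemma rep_nz:
  assumes x: "\<xi>$1 \<noteq> 0"
  shows "h \<xi> = form \<psi>1 \<psi>2 \<psi>3 \<xi>"
proof -
  define x y z where "x = \<xi>$1" and "y = \<xi>$2" and "z = \<xi>$3"
  define s where "s = - y / x"
  have x0: "x \<noteq> 0" using x x_def by simp
  have p: "pflow \<xi> s = vector [x, 0, beta \<xi> / (2 * x)]"
    using x0 unfolding pflow_def s_def beta_def x_def[symmetric] y_def[symmetric] z_def[symmetric]
    by (simp add: field_simps power2_eq_square)
  have P1: "h (pflow \<xi> s) $ 1 = x^2 * \<psi>1 x (beta \<xi>)"
    unfolding p sl1 \<psi>1_def using conv[where j=2 and d=d and x=x and G=A and b="beta \<xi>"] x0 d1 A_van by simp
  have P2: "h (pflow \<xi> s) $ 2 = x * \<psi>2 x (beta \<xi>)"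
    unfolding p sl2 \<psi>2_def using conv[where j=1 and d=d and x=x and G=D and b="beta \<xi>"] x0 d1 D_van by simp
  have P3: "h (pflow \<xi> s) $ 3 = \<psi>3 x (beta \<xi>)"
    unfolding p sl3 \<psi>3_def using conv[where j=0 and d=d and x=x and G=B and b="beta \<xi>"] x0 d1 B_van by simp
  have f1: "h \<xi> $ 1 = h (pflow \<xi> s) $ 1" using fl(1) by simp
  have f2: "h \<xi> $ 2 = h (pflow \<xi> s) $ 2 - s * h (pflow \<xi> s) $ 1" using fl(2)[of \<xi> s] fl(1)[of \<xi> s] by simp
  have f3: "h \<xi> $ 3 = h (pflow \<xi> s) $ 3 - s * h (pflow \<xi> s) $ 2 + s^2/2 * h (pflow \<xi> s) $ 1"
    using fl(3)[of \<xi> s] fl(2)[of \<xi> s] fl(1)[of \<xi> s] by (simp add: algebra_simps power2_eq_square)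
  show ?thesis
    unfolding vec_eq_iff forall_3 form_def vector_3 f1 f2 f3 P1 P2 P3 x_def[symmetric] y_def[symmetric]
    using x0 by (simp add: s_def field_simps power2_eq_square)
qed

end

lemma form_cont:
  assumes "continuous F g"
  shows "continuous F (\<lambda>t. form (wpoly m1 c1) (wpoly m2 c2) (wpoly m3 c3) (g t) $ i)"
proof -
  have "i = 1 \<or> i = 2 \<or> i = 3" by (rule exhaust_3)
  then show ?thesis
  proof (elim disjE)
    assume i: "i = 1"
    show ?thesis unfolding i form_def beta_def vector_3 by (intro continuous_intros assms)
  next
    assume i: "i = 2"
    show ?thesis unfolding i form_def beta_def vector_3 by (intro continuous_intros assms)
  next
    assume i: "i = 3"
    show ?thesis unfolding i form_def beta_def vector_3 by (intro continuous_intros assms)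
  qed
qed

context Xel begin

lemma rep_all: "h \<xi> = form \<psi>1 \<psi>2 \<psi>3 \<xi>"
proof (cases "\<xi>$1 = 0")
  case False then show ?thesis by (rule rep_nz)
next
  case True
  have "h \<xi> $ i = form \<psi>1 \<psi>2 \<psi>3 \<xi> $ i" for i
  proof -
    define F where "F t = h (\<xi> + t *\<^sub>R axis 1 1) $ i - form \<psi>1 \<psi>2 \<psi>3 (\<xi> + t *\<^sub>R axis 1 1) $ i" for t
    have "F 0 = 0"
    proof (rule cont_zero)
      have c1: "continuous (at 0) (\<lambda>t. \<xi> + t *\<^sub>R axis 1 1)" by (intro continuous_intros)
      have c2: "continuous (at 0) (\<lambda>t. h (\<xi> + t *\<^sub>R axis 1 1) $ i)"
        using continuous_at_compose[OF c1, of "\<lambda>\<eta>. h \<eta> $ i"] hom_poly3_continuous[OF F3_comp[OF hF]]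
        by (simp add: o_def)
      show "continuous (at 0) F" unfolding F_def \<psi>1_def \<psi>2_def \<psi>3_def
        by (intro continuous_intros c2 form_cont c1)
    next
      fix t :: real assume t: "t \<noteq> 0"
      have "(\<xi> + t *\<^sub>R axis 1 1) $ 1 \<noteq> 0" using True t by simp
      then show "F t = 0" unfolding F_def using rep_nz by simp
    qed
    then show ?thesis unfolding F_def by simp
  qed
  then show ?thesis by (simp add: vec_eq_iff)
qed

end

definition "wdx m c x b = (\<Sum>k\<in>Kset m. c k * (real (nat (m - 2 * int k)) * x ^ (nat (m - 2 * int k) - 1)) * b ^ k)"
definition "wdb m c x b = (\<Sum>k\<in>Kset m. c k * x ^ nat (m - 2 * int k) * (real k * b ^ (k - 1)))"

lemma wpoly_chain:
  assumes "(X has_real_derivative X') (at t)" "(Y has_real_derivative Y') (at t)"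
  shows "((\<lambda>s. wpoly m c (X s) (Y s)) has_real_derivative (X' * wdx m c (X t) (Y t) + Y' * wdb m c (X t) (Y t))) (at t)"
proof -
  have "((\<lambda>s. wpoly m c (X s) (Y s)) has_real_derivative
     (\<Sum>k\<in>Kset m. c k * (real (nat (m - 2 * int k)) * X t ^ (nat (m - 2 * int k) - 1) * X') * Y t ^ k
        + c k * X t ^ nat (m - 2 * int k) * (real k * Y t ^ (k - 1) * Y'))) (at t)"
    unfolding wpoly_def
    apply (rule derivative_eq_intros assms refl | simp)+
    apply (intro sum.cong refl)
    apply (simp add: algebra_simps)
    done
  moreover have "(\<Sum>k\<in>Kset m. c k * (real (nat (m - 2 * int k)) * X t ^ (nat (m - 2 * int k) - 1) * X') * Y t ^ k
        + c k * X t ^ nat (m - 2 * int k) * (real k * Y t ^ (k - 1) * Y'))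
      = X' * wdx m c (X t) (Y t) + Y' * wdb m c (X t) (Y t)"
    unfolding wdx_def wdb_def sum_distrib_left sum.distrib[symmetric] by (intro sum.cong refl) (simp add: algebra_simps)
  ultimately show ?thesis by simp
qed

lemma deriv_wpoly_x: "deriv (\<lambda>t. wpoly m c t b) x = wdx m c x b"
proof -
  have "((\<lambda>t. wpoly m c t b) has_real_derivative (1 * wdx m c x b + 0 * wdb m c x b)) (at x)"
    using wpoly_chain[of "\<lambda>t. t" 1 x "\<lambda>t. b" 0 m c] by (simp add: DERIV_ident)
  then show ?thesis by (simp add: DERIV_imp_deriv)
qed

lemma deriv_wpoly_b: "deriv (\<lambda>t. wpoly m c x t) b = wdb m c x b"
proof -
  have "((\<lambda>t. wpoly m c x t) has_real_derivative (0 * wdx m c x b + 1 * wdb m c x b)) (at b)"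
    using wpoly_chain[of "\<lambda>t. x" 0 b "\<lambda>t. t" 1 m c] by (simp add: DERIV_ident)
  then show ?thesis by (simp add: DERIV_imp_deriv)
qed

lemma Kset_shift: "Kset (int d) - {0} = Suc ` Kset (int d - 2)"
proof (rule set_eqI)
  fix k
  show "k \<in> Kset (int d) - {0} \<longleftrightarrow> k \<in> Suc ` Kset (int d - 2)"
    unfolding Kset_def by (cases k) auto
qed

lemma constr_wpoly:
  assumes rel: "\<And>k. k \<in> Kset (int d - 2) \<Longrightarrow> a k * (real d + 1 - real k) + 2 * (real k + 1) * b (Suc k) = 0"
  shows "- 2 * deriv (\<lambda>t. wpoly (int d) b x t) bb =
      x * deriv (\<lambda>t. wpoly (int d - 2) a t bb) x + 3 * wpoly (int d - 2) a x bb + bb * deriv (\<lambda>t. wpoly (int d - 2) a x t) bb"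
proof -
  have L: "wdb (int d) b x bb = (\<Sum>j\<in>Kset (int d - 2). b (Suc j) * x ^ nat (int d - 2 - 2 * int j) * (real j + 1) * bb ^ j)"
  proof -
    have "wdb (int d) b x bb = (\<Sum>k\<in>Kset (int d) - {0}. b k * x ^ nat (int d - 2 * int k) * (real k * bb ^ (k - 1)))"
      unfolding wdb_def by (rule sum.mono_neutral_right) auto
    also have "\<dots> = (\<Sum>j\<in>Kset (int d - 2). b (Suc j) * x ^ nat (int d - 2 - 2 * int j) * (real j + 1) * bb ^ j)"
      unfolding Kset_shift by (subst sum.reindex) (auto simp: algebra_simps)
    finally show ?thesis .
  qed
  have R: "x * wdx (int d - 2) a x bb + 3 * wpoly (int d - 2) a x bb + bb * wdb (int d - 2) a x bb
      = (\<Sum>j\<in>Kset (int d - 2). a j * (real d + 1 - real j) * x ^ nat (int d - 2 - 2 * int j) * bb ^ j)"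
    unfolding wdx_def wdb_def wpoly_def sum_distrib_left sum.distrib[symmetric]
  proof (intro sum.cong refl)
    fix j assume j: "j \<in> Kset (int d - 2)"
    define n where "n = nat (int d - 2 - 2 * int j)"
    have nr: "real n = real d - 2 - 2 * real j" using j unfolding n_def Kset_def by auto
    have xn: "x * (real n * x ^ (n - 1)) = real n * x ^ n" by (cases n) auto
    have bn: "bb * (real j * bb ^ (j - 1)) = real j * bb ^ j" by (cases j) auto
    show "x * (a j * (real (nat (int d - 2 - 2 * int j)) * x ^ (nat (int d - 2 - 2 * int j) - 1)) * bb ^ j) +
         3 * (a j * x ^ nat (int d - 2 - 2 * int j) * bb ^ j) +
         bb * (a j * x ^ nat (int d - 2 - 2 * int j) * (real j * bb ^ (j - 1))) =
         a j * (real d + 1 - real j) * x ^ nat (int d - 2 - 2 * int j) * bb ^ j"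
      unfolding n_def[symmetric]
    proof -
      have "x * (a j * (real n * x ^ (n - 1)) * bb ^ j) + 3 * (a j * x ^ n * bb ^ j) + bb * (a j * x ^ n * (real j * bb ^ (j - 1)))
          = a j * bb ^ j * (x * (real n * x ^ (n - 1))) + 3 * (a j * x ^ n * bb ^ j) + a j * x ^ n * (bb * (real j * bb ^ (j - 1)))"
        by (simp add: algebra_simps)
      also have "\<dots> = a j * (real n + 3 + real j) * x ^ n * bb ^ j" unfolding xn bn by (simp add: algebra_simps)
      finally show "x * (a j * (real n * x ^ (n - 1)) * bb ^ j) + 3 * (a j * x ^ n * bb ^ j) + bb * (a j * x ^ n * (real j * bb ^ (j - 1)))
          = a j * (real d + 1 - real j) * x ^ n * bb ^ j" unfolding nr by (simp add: algebra_simps)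
    qed
  qed
  have "- 2 * wdb (int d) b x bb = (\<Sum>j\<in>Kset (int d - 2). a j * (real d + 1 - real j) * x ^ nat (int d - 2 - 2 * int j) * bb ^ j)"
    unfolding L sum_distrib_left
  proof (intro sum.cong refl)
    fix j assume j: "j \<in> Kset (int d - 2)"
    have aj: "a j * (real d + 1 - real j) = - (2 * (real j + 1) * b (Suc j))" using rel[OF j] by linarith
    show "- 2 * (b (Suc j) * x ^ nat (int d - 2 - 2 * int j) * (real j + 1) * bb ^ j) =
        a j * (real d + 1 - real j) * x ^ nat (int d - 2 - 2 * int j) * bb ^ j" unfolding aj by (simp add: algebra_simps)
  qed
  then show ?thesis unfolding deriv_wpoly_x deriv_wpoly_b R by simp
qed

context Xel begin

lemma constr: "- 2 * deriv (\<lambda>t. \<psi>3 x t) bb = x * deriv (\<lambda>t. \<psi>1 t bb) x + 3 * \<psi>1 x bb + bb * deriv (\<lambda>t. \<psi>1 x t) bb"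
  unfolding \<psi>1_def \<psi>3_def
proof (rule constr_wpoly)
  fix k assume k: "k \<in> Kset (int d - 2)"
  then have kd: "k \<le> d" unfolding Kset_def by auto
  have "A k * (real d - real k + 1) + (real k + 1) * B (Suc k) = 0" by (rule div_rel[OF kd])
  moreover have "A k / 2 ^ k * (real d + 1 - real k) + 2 * (real k + 1) * (B (Suc k) / 2 ^ Suc k)
     = (A k * (real d - real k + 1) + (real k + 1) * B (Suc k)) / 2^k"
    by (simp add: field_simps)
  ultimately show "A k / 2 ^ k * (real d + 1 - real k) + 2 * (real k + 1) * (B (Suc k) / 2 ^ Suc k) = 0"
    by simp
qed

end

lemma wpoly_chain_eq:
  assumes "(X has_real_derivative X') (at t)" "(Y has_real_derivative Y') (at t)"
    and "D = X' * wdx m c (X t) (Y t) + Y' * wdb m c (X t) (Y t)"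
  shows "((\<lambda>s. wpoly m c (X s) (Y s)) has_real_derivative D) (at t)"
  using wpoly_chain[OF assms(1,2)] assms(3) by simp

lemma hp_deg: "hp p f \<Longrightarrow> p = q \<Longrightarrow> hp q f" by simp

lemma hp_wpoly:
  assumes f: "hp a f" and deg: "int a + m = int d"
  shows "hp d (\<lambda>\<xi>. f \<xi> * wpoly m c (\<xi>$1) (beta \<xi>))"
proof -
  have "hp d (\<lambda>\<xi>. \<Sum>k\<in>Kset m. c k * (f \<xi> * ((\<xi>$1) ^ nat (m - 2 * int k) * (beta \<xi>) ^ k)))"
  proof (rule hp_sum)
    fix k assume k: "k \<in> Kset m"
    have h1: "hp (1 * nat (m - 2 * int k)) (\<lambda>\<xi>. (\<xi>$1) ^ nat (m - 2 * int k))" by (rule hp_pow[OF hp_x])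
    have h2: "hp (2 * k) (\<lambda>\<xi>. (beta \<xi>) ^ k)" by (rule hp_pow[OF hp_beta])
    have "hp (a + (1 * nat (m - 2 * int k) + 2 * k)) (\<lambda>\<xi>. f \<xi> * ((\<xi>$1) ^ nat (m - 2 * int k) * (beta \<xi>) ^ k))"
      by (rule hp_mult[OF f hp_mult[OF h1 h2]])
    then have "hp d (\<lambda>\<xi>. f \<xi> * ((\<xi>$1) ^ nat (m - 2 * int k) * (beta \<xi>) ^ k))"
      by (rule hp_deg) (use k deg in \<open>auto simp: Kset_def\<close>)
    then show "hp d (\<lambda>\<xi>. c k * (f \<xi> * ((\<xi>$1) ^ nat (m - 2 * int k) * (beta \<xi>) ^ k)))" by (rule hp_smul)
  qed simp
  then show ?thesis unfolding wpoly_def sum_distrib_left by (simp add: algebra_simps)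
qed

lemma hp_xx: "hp 2 (\<lambda>\<xi>. (\<xi>$1)^2)" using hp_pow[OF hp_x, of 2] by simp
lemma hp_xy: "hp 2 (\<lambda>\<xi>. \<xi>$1 * \<xi>$2)" by (rule hp_deg[OF hp_mult[OF hp_x hp_y]]) simp
lemma hp_yy2: "hp 2 (\<lambda>\<xi>. 1/2 * (\<xi>$2)^2)" by (rule hp_deg[OF hp_smul[OF hp_pow[OF hp_y, of 2], of "1/2"]]) simp

lemma form_F3:
  assumes d: "d \<ge> 1"
  shows "form (wpoly (int d - 2) c1) (wpoly (int d - 1) c2) (wpoly (int d) c3) \<in> F3 d"
  unfolding F3_def
proof (clarify)
  fix i :: 3
  let ?w1 = "wpoly (int d - 2) c1" and ?w2 = "wpoly (int d - 1) c2" and ?w3 = "wpoly (int d) c3"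
  have a1: "hp d (\<lambda>\<xi>. (\<xi>$1)^2 * ?w1 (\<xi>$1) (beta \<xi>))" by (rule hp_wpoly[OF hp_xx]) simp
  have a2: "hp d (\<lambda>\<xi>. \<xi>$1 * \<xi>$2 * ?w1 (\<xi>$1) (beta \<xi>) + \<xi>$1 * ?w2 (\<xi>$1) (beta \<xi>))"
    by (rule hp_add[OF hp_wpoly[OF hp_xy] hp_wpoly[OF hp_x]]) auto
  have a3: "hp d (\<lambda>\<xi>. 1/2 * (\<xi>$2)^2 * ?w1 (\<xi>$1) (beta \<xi>) + \<xi>$2 * ?w2 (\<xi>$1) (beta \<xi>) + 1 * ?w3 (\<xi>$1) (beta \<xi>))"
    by (rule hp_add[OF hp_add[OF hp_wpoly[OF hp_yy2] hp_wpoly[OF hp_y]] hp_wpoly[OF hp_one]]) auto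
  have "i = 1 \<or> i = 2 \<or> i = 3" by (rule exhaust_3)
  then show "hom_poly3 d (\<lambda>\<xi>. form ?w1 ?w2 ?w3 \<xi> $ i)"
    using hp_hom[OF a1] hp_hom[OF a2] hp_hom[OF a3] by (auto simp: form_def)
qed

lemma form_ad:
  "ad (transpose Nmat) (form (wpoly m1 c1) (wpoly m2 c2) (wpoly m3 c3)) = (\<lambda>_. 0)"
proof (rule ext)
  fix \<xi> :: vec3
  let ?h = "form (wpoly m1 c1) (wpoly m2 c2) (wpoly m3 c3)"
  define x y z where "x = \<xi>$1" and "y = \<xi>$2" and "z = \<xi>$3"
  let ?v = "vector [0, \<xi>$1, \<xi>$2] :: vec3"
  have pt: "\<xi> + t *\<^sub>R ?v = vector [x, y + t * x, z + t * y]" for t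
    unfolding vec_eq_iff forall_3 x_def y_def z_def by simp
  define Y where "Y t = 2 * (z + t * y) * x - (y + t * x)^2" for t
  have bY: "beta (\<xi> + t *\<^sub>R ?v) = Y t" for t unfolding pt Y_def beta_def by simp
  have Y0: "Y 0 = beta \<xi>" unfolding Y_def beta_def x_def y_def z_def by simp
  have dY: "(Y has_real_derivative 0) (at 0)"
  proof -
    have "(Y has_real_derivative (2 * (0 + 1 * y) * x + 0 - 2 * (y + 0 * x) * (0 + 1 * x))) (at 0)"
      unfolding Y_def by (rule derivative_eq_intros refl | simp)+
    then show ?thesis by simp
  qed
  have dX: "((\<lambda>t. x) has_real_derivative 0) (at 0)" by (rule DERIV_const)
  let ?p1 = "wpoly m1 c1 x (beta \<xi>)" and ?p2 = "wpoly m2 c2 x (beta \<xi>)"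
  have W1: "((\<lambda>t. wpoly m1 c1 x (Y t)) has_real_derivative 0) (at 0)"
    using wpoly_chain[OF dX dY, of m1 c1] by simp
  have W2: "((\<lambda>t. wpoly m2 c2 x (Y t)) has_real_derivative 0) (at 0)"
    using wpoly_chain[OF dX dY, of m2 c2] by simp
  have W3: "((\<lambda>t. wpoly m3 c3 x (Y t)) has_real_derivative 0) (at 0)"
    using wpoly_chain[OF dX dY, of m3 c3] by simp
  have D1: "deriv (\<lambda>t. ?h (\<xi> + t *\<^sub>R ?v) $ 1) 0 = 0"
  proof -
    have "((\<lambda>t. x^2 * wpoly m1 c1 x (Y t)) has_real_derivative x^2 * 0) (at 0)"
      by (rule DERIV_cmult[OF W1])
    then have "deriv (\<lambda>t. x^2 * wpoly m1 c1 x (Y t)) 0 = 0" by (simp add: DERIV_imp_deriv)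
    moreover have "(\<lambda>t. ?h (\<xi> + t *\<^sub>R ?v) $ 1) = (\<lambda>t. x^2 * wpoly m1 c1 x (Y t))"
      unfolding form_def bY by (simp add: pt)
    ultimately show ?thesis by simp
  qed
  have D2: "deriv (\<lambda>t. ?h (\<xi> + t *\<^sub>R ?v) $ 2) 0 = x^2 * ?p1"
  proof -
    have e1: "((\<lambda>t. x * (y + t * x)) has_real_derivative x * x) (at 0)"
      using DERIV_cmult[OF DERIV_add[OF DERIV_const[of y] DERIV_cmult_right[OF DERIV_ident, of x]], of x] by simp
    have "((\<lambda>t. x * (y + t * x) * wpoly m1 c1 x (Y t) + x * wpoly m2 c2 x (Y t)) has_real_derivative
        (x * x * wpoly m1 c1 x (Y 0) + 0 * (x * (y + 0 * x))) + x * 0) (at 0)"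
      by (rule DERIV_add[OF DERIV_mult[OF e1 W1] DERIV_cmult[OF W2]])
    then have "deriv (\<lambda>t. x * (y + t * x) * wpoly m1 c1 x (Y t) + x * wpoly m2 c2 x (Y t)) 0 = x^2 * ?p1"
      using Y0 by (simp add: DERIV_imp_deriv power2_eq_square)
    moreover have "(\<lambda>t. ?h (\<xi> + t *\<^sub>R ?v) $ 2) = (\<lambda>t. x * (y + t * x) * wpoly m1 c1 x (Y t) + x * wpoly m2 c2 x (Y t))"
      unfolding form_def bY by (simp add: pt)
    ultimately show ?thesis by simp
  qed
  have D3: "deriv (\<lambda>t. ?h (\<xi> + t *\<^sub>R ?v) $ 3) 0 = x * y * ?p1 + x * ?p2"
  proof -
    have e1: "((\<lambda>t. 1/2 * (y + t * x)^2) has_real_derivative x * y) (at 0)"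
      by (auto intro!: derivative_eq_intros simp: algebra_simps)
    have e2: "((\<lambda>t. y + t * x) has_real_derivative x) (at 0)"
      using DERIV_add[OF DERIV_const[of y] DERIV_cmult_right[OF DERIV_ident, of x]] by simp
    have "((\<lambda>t. 1/2 * (y + t * x)^2 * wpoly m1 c1 x (Y t) + (y + t * x) * wpoly m2 c2 x (Y t) + wpoly m3 c3 x (Y t)) has_real_derivative
        ((x * y) * wpoly m1 c1 x (Y 0) + 0 * (1/2 * (y + 0 * x)^2)) + (x * wpoly m2 c2 x (Y 0) + 0 * (y + 0 * x)) + 0) (at 0)"
      by (rule DERIV_add[OF DERIV_add[OF DERIV_mult[OF e1 W1] DERIV_mult[OF e2 W2]] W3])
    then have "deriv (\<lambda>t. 1/2 * (y + t * x)^2 * wpoly m1 c1 x (Y t) + (y + t * x) * wpoly m2 c2 x (Y t) + wpoly m3 c3 x (Y t)) 0 = x * y * ?p1 + x * ?p2"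
      using Y0 by (simp add: DERIV_imp_deriv algebra_simps)
    moreover have "(\<lambda>t. ?h (\<xi> + t *\<^sub>R ?v) $ 3) = (\<lambda>t. 1/2 * (y + t * x)^2 * wpoly m1 c1 x (Y t) + (y + t * x) * wpoly m2 c2 x (Y t) + wpoly m3 c3 x (Y t))"
      unfolding form_def bY by (simp add: pt)
    ultimately show ?thesis by simp
  qed
  have "Dfield ?h \<xi> ?v = vector [0, ?h \<xi> $ 1, ?h \<xi> $ 2]"
    unfolding vec_eq_iff forall_3 Dfield_def using D1 D2 D3
    by (simp add: form_def x_def y_def)
  then show "ad (transpose Nmat) ?h \<xi> = 0" unfolding ad_def Tmul by simp
qed


lemma form_div:
  assumes cons: "\<And>x b. - 2 * deriv (\<lambda>t. wpoly m3 c3 x t) b =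
      x * deriv (\<lambda>t. wpoly m1 c1 t b) x + 3 * wpoly m1 c1 x b + b * deriv (\<lambda>t. wpoly m1 c1 x t) b"
  shows "divergence (form (wpoly m1 c1) (wpoly m2 c2) (wpoly m3 c3)) \<xi> = 0"
proof -
  let ?h = "form (wpoly m1 c1) (wpoly m2 c2) (wpoly m3 c3)"
  define x y z where "x = \<xi>$1" and "y = \<xi>$2" and "z = \<xi>$3"
  define \<beta> where "\<beta> = beta \<xi>"
  have b: "\<beta> = 2 * z * x - y^2" unfolding \<beta>_def beta_def x_def y_def z_def by simp
  have cons': "- 2 * wdb m3 c3 x \<beta> = x * wdx m1 c1 x \<beta> + 3 * wpoly m1 c1 x \<beta> + \<beta> * wdb m1 c1 x \<beta>"
    using cons[of x \<beta>] unfolding deriv_wpoly_x deriv_wpoly_b .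
  have p1: "\<xi> + t *\<^sub>R axis 1 1 = vector [x + t, y, z]" for t
    unfolding vec_eq_iff forall_3 x_def y_def z_def by (simp add: axis_def)
  have p2: "\<xi> + t *\<^sub>R axis 2 1 = vector [x, y + t, z]" for t
    unfolding vec_eq_iff forall_3 x_def y_def z_def by (simp add: axis_def)
  have p3: "\<xi> + t *\<^sub>R axis 3 1 = vector [x, y, z + t]" for t
    unfolding vec_eq_iff forall_3 x_def y_def z_def by (simp add: axis_def)
  define Y1 where "Y1 t = 2 * z * (x + t) - y^2" for t
  define Y2 where "Y2 t = 2 * z * x - (y + t)^2" for t
  define Y3 where "Y3 t = 2 * (z + t) * x - y^2" for t
  have Y0: "Y1 0 = \<beta>" "Y2 0 = \<beta>" "Y3 0 = \<beta>" unfolding Y1_def Y2_def Y3_def b by simp_all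
  have dY1: "(Y1 has_real_derivative 2 * z) (at 0)" unfolding Y1_def by (auto intro!: derivative_eq_intros)
  have dY2: "(Y2 has_real_derivative - 2 * y) (at 0)" unfolding Y2_def by (auto intro!: derivative_eq_intros)
  have dY3: "(Y3 has_real_derivative 2 * x) (at 0)" unfolding Y3_def by (auto intro!: derivative_eq_intros)
  have dX1: "((\<lambda>t. x + t) has_real_derivative 1) (at 0)" by (auto intro!: derivative_eq_intros)
  have dXc: "((\<lambda>t. x) has_real_derivative 0) (at 0)" by (rule DERIV_const)
  have W1: "((\<lambda>t. wpoly m1 c1 (x + t) (Y1 t)) has_real_derivative wdx m1 c1 x \<beta> + 2 * z * wdb m1 c1 x \<beta>) (at 0)"
    using wpoly_chain[OF dX1 dY1, of m1 c1] Y0 by simp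
  have W2a: "((\<lambda>t. wpoly m1 c1 x (Y2 t)) has_real_derivative - 2 * y * wdb m1 c1 x \<beta>) (at 0)"
    using wpoly_chain[OF dXc dY2, of m1 c1] Y0 by simp
  have W2b: "((\<lambda>t. wpoly m2 c2 x (Y2 t)) has_real_derivative - 2 * y * wdb m2 c2 x \<beta>) (at 0)"
    using wpoly_chain[OF dXc dY2, of m2 c2] Y0 by simp
  have W3a: "((\<lambda>t. wpoly m1 c1 x (Y3 t)) has_real_derivative 2 * x * wdb m1 c1 x \<beta>) (at 0)"
    using wpoly_chain[OF dXc dY3, of m1 c1] Y0 by simp
  have W3b: "((\<lambda>t. wpoly m2 c2 x (Y3 t)) has_real_derivative 2 * x * wdb m2 c2 x \<beta>) (at 0)"
    using wpoly_chain[OF dXc dY3, of m2 c2] Y0 by simp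
  have W3c: "((\<lambda>t. wpoly m3 c3 x (Y3 t)) has_real_derivative 2 * x * wdb m3 c3 x \<beta>) (at 0)"
    using wpoly_chain[OF dXc dY3, of m3 c3] Y0 by simp
  have e1: "((\<lambda>t. (x + t)^2) has_real_derivative 2 * x) (at 0)" by (auto intro!: derivative_eq_intros)
  have e2: "((\<lambda>t. x * (y + t)) has_real_derivative x) (at 0)" by (auto intro!: derivative_eq_intros)
  have D1: "deriv (\<lambda>t. ?h (\<xi> + t *\<^sub>R axis 1 1) $ 1) 0 =
      2 * x * wpoly m1 c1 x \<beta> + x^2 * (wdx m1 c1 x \<beta> + 2 * z * wdb m1 c1 x \<beta>)"
  proof -
    have fe: "(\<lambda>t. ?h (\<xi> + t *\<^sub>R axis 1 1) $ 1) = (\<lambda>t. (x + t)^2 * wpoly m1 c1 (x + t) (Y1 t))"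
      unfolding form_def p1 by (simp add: beta_def Y1_def algebra_simps)
    have "((\<lambda>t. (x + t)^2 * wpoly m1 c1 (x + t) (Y1 t)) has_real_derivative
        2 * x * wpoly m1 c1 (x + 0) (Y1 0) + (wdx m1 c1 x \<beta> + 2 * z * wdb m1 c1 x \<beta>) * (x + 0)^2) (at 0)"
      by (rule DERIV_mult[OF e1 W1])
    then show ?thesis unfolding fe using Y0 by (simp add: DERIV_imp_deriv algebra_simps)
  qed
  have D2: "deriv (\<lambda>t. ?h (\<xi> + t *\<^sub>R axis 2 1) $ 2) 0 =
      x * wpoly m1 c1 x \<beta> + x * y * (- 2 * y * wdb m1 c1 x \<beta>) + x * (- 2 * y * wdb m2 c2 x \<beta>)"
  proof -
    have fe: "(\<lambda>t. ?h (\<xi> + t *\<^sub>R axis 2 1) $ 2) = (\<lambda>t. x * (y + t) * wpoly m1 c1 x (Y2 t) + x * wpoly m2 c2 x (Y2 t))"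
      unfolding form_def p2 by (simp add: beta_def Y2_def algebra_simps)
    have "((\<lambda>t. x * (y + t) * wpoly m1 c1 x (Y2 t) + x * wpoly m2 c2 x (Y2 t)) has_real_derivative
        (x * wpoly m1 c1 x (Y2 0) + (- 2 * y * wdb m1 c1 x \<beta>) * (x * (y + 0))) + x * (- 2 * y * wdb m2 c2 x \<beta>)) (at 0)"
      by (rule DERIV_add[OF DERIV_mult[OF e2 W2a] DERIV_cmult[OF W2b]])
    then show ?thesis unfolding fe using Y0 by (simp add: DERIV_imp_deriv algebra_simps)
  qed
  have D3: "deriv (\<lambda>t. ?h (\<xi> + t *\<^sub>R axis 3 1) $ 3) 0 =
      1/2 * y^2 * (2 * x * wdb m1 c1 x \<beta>) + y * (2 * x * wdb m2 c2 x \<beta>) + 2 * x * wdb m3 c3 x \<beta>"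
  proof -
    have fe: "(\<lambda>t. ?h (\<xi> + t *\<^sub>R axis 3 1) $ 3) = (\<lambda>t. 1/2 * y^2 * wpoly m1 c1 x (Y3 t) + y * wpoly m2 c2 x (Y3 t) + wpoly m3 c3 x (Y3 t))"
      unfolding form_def p3 by (simp add: beta_def Y3_def algebra_simps)
    have "((\<lambda>t. 1/2 * y^2 * wpoly m1 c1 x (Y3 t) + y * wpoly m2 c2 x (Y3 t) + wpoly m3 c3 x (Y3 t)) has_real_derivative
        1/2 * y^2 * (2 * x * wdb m1 c1 x \<beta>) + y * (2 * x * wdb m2 c2 x \<beta>) + 2 * x * wdb m3 c3 x \<beta>) (at 0)"
      by (rule DERIV_add[OF DERIV_add[OF DERIV_cmult[OF W3a] DERIV_cmult[OF W3b]] W3c])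
    then show ?thesis unfolding fe by (simp add: DERIV_imp_deriv)
  qed
  have "divergence ?h \<xi> = x * (3 * wpoly m1 c1 x \<beta> + x * wdx m1 c1 x \<beta> + \<beta> * wdb m1 c1 x \<beta> + 2 * wdb m3 c3 x \<beta>)"
    unfolding divergence_def sum_3 D1 D2 D3 b by (simp add: algebra_simps power2_eq_square)
  also have "\<dots> = 0" using cons' by simp
  finally show ?thesis .
qed


definition "Xs d = {h \<in> F3 d. ad (transpose Nmat) h = (\<lambda>_. 0)} \<inter> V3 d"

lemma form_in_X:
  assumes d: "d \<ge> 1"
    and cons: "\<And>x b. - 2 * deriv (\<lambda>t. wpoly (int d) c3 x t) b =
      x * deriv (\<lambda>t. wpoly (int d - 2) c1 t b) x + 3 * wpoly (int d - 2) c1 x b + b * deriv (\<lambda>t. wpoly (int d - 2) c1 x t) b"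
  shows "form (wpoly (int d - 2) c1) (wpoly (int d - 1) c2) (wpoly (int d) c3) \<in> Xs d"
proof -
  have "divergence (form (wpoly (int d - 2) c1) (wpoly (int d - 1) c2) (wpoly (int d) c3)) \<xi> = 0" for \<xi>
    by (rule form_div[OF cons])
  then show ?thesis
    unfolding Xs_def V3_def
    using form_F3[OF d, of c1 c2 c3] form_ad[of "int d - 2" c1 "int d - 1" c2 "int d" c3]
    by auto
qed

lemma mem_X:
  assumes d: "d \<ge> 1"
    and rel: "\<And>k. k \<in> Kset (int d - 2) \<Longrightarrow> a k * (real d + 1 - real k) + 2 * (real k + 1) * b (Suc k) = 0"
  shows "form (wpoly (int d - 2) a) (wpoly (int d - 1) c) (wpoly (int d) b) \<in> Xs d"
  by (rule form_in_X[OF d constr_wpoly[OF rel]])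

lemma X_Xel: "d \<ge> 1 \<Longrightarrow> h \<in> Xs d \<Longrightarrow> Xel d h"
  unfolding Xs_def V3_def by unfold_locales auto

lemma form_let: "(let x = \<xi>$1; y = \<xi>$2; p1 = \<psi>1 x (beta \<xi>); p2 = \<psi>2 x (beta \<xi>);
                         p3 = \<psi>3 x (beta \<xi>) in
                  h \<xi> = vector [x^2 * p1, x * y * p1 + x * p2, (1/2) * y^2 * p1 + y * p2 + p3])
   \<longleftrightarrow> h \<xi> = form \<psi>1 \<psi>2 \<psi>3 \<xi>"
  unfolding Let_def form_def by simp

lemma seteq:
  assumes d: "d \<ge> 1"
  shows "Xs d =
           {h. \<exists>\<psi>1 \<psi>2 \<psi>3.
               whom_poly (int d - 2) \<psi>1 \<and> whom_poly (int d - 1) \<psi>2 \<and> whom_poly (int d) \<psi>3 \<and>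
               (\<forall>x b. - 2 * deriv (\<lambda>t. \<psi>3 x t) b =
                   x * deriv (\<lambda>t. \<psi>1 t b) x + 3 * \<psi>1 x b + b * deriv (\<lambda>t. \<psi>1 x t) b) \<and>
               (\<forall>\<xi>. let x = \<xi>$1; y = \<xi>$2; p1 = \<psi>1 x (beta \<xi>); p2 = \<psi>2 x (beta \<xi>);
                         p3 = \<psi>3 x (beta \<xi>) in
                  h \<xi> = vector [x^2 * p1, x * y * p1 + x * p2, (1/2) * y^2 * p1 + y * p2 + p3])}"
  (is "_ = ?S")
proof
  show "Xs d \<subseteq> ?S"
  proof
    fix h assume h: "h \<in> Xs d"
    interpret Xel d h by (rule X_Xel[OF d h])
    show "h \<in> ?S"
      unfolding form_let
      by (intro CollectI exI[of _ \<psi>1] exI[of _ \<psi>2] exI[of _ \<psi>3] conjI allI constr rep_all)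
        (simp_all add: \<psi>1_def \<psi>2_def \<psi>3_def whom_wpoly)
  qed
next
  show "?S \<subseteq> Xs d"
  proof
    fix h assume "h \<in> ?S"
    then obtain \<psi>1 \<psi>2 \<psi>3 where w1: "whom_poly (int d - 2) \<psi>1" and w2: "whom_poly (int d - 1) \<psi>2"
      and w3: "whom_poly (int d) \<psi>3"
      and cons: "\<forall>x b. - 2 * deriv (\<lambda>t. \<psi>3 x t) b =
                   x * deriv (\<lambda>t. \<psi>1 t b) x + 3 * \<psi>1 x b + b * deriv (\<lambda>t. \<psi>1 x t) b"
      and rep: "\<forall>\<xi>. h \<xi> = form \<psi>1 \<psi>2 \<psi>3 \<xi>"
      unfolding form_let by blast
    obtain c1 where c1: "\<psi>1 = wpoly (int d - 2) c1" using whom_poly_wpoly[OF w1] by blast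
    obtain c2 where c2: "\<psi>2 = wpoly (int d - 1) c2" using whom_poly_wpoly[OF w2] by blast
    obtain c3 where c3: "\<psi>3 = wpoly (int d) c3" using whom_poly_wpoly[OF w3] by blast
    have "h = form \<psi>1 \<psi>2 \<psi>3" using rep by auto
    then show "h \<in> Xs d" unfolding c1 c2 c3
      by (rule ssubst, intro form_in_X[OF d]) (use cons c1 c3 in auto)
  qed
qed


definition dl :: "nat \<Rightarrow> nat \<Rightarrow> real" where "dl k = (\<lambda>k'. if k' = k then 1 else 0)"
definition gam :: "nat \<Rightarrow> nat \<Rightarrow> real" where "gam d k = - (real d + 1 - real k) / (2 * (real k + 1))"
definition gk :: "nat \<Rightarrow> nat \<Rightarrow> nat \<Rightarrow> real" where "gk d k = (\<lambda>k'. if k' = Suc k then gam d k else 0)"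
definition zc :: "nat \<Rightarrow> real" where "zc = (\<lambda>_. 0)"

definition Eb :: "nat \<Rightarrow> nat \<Rightarrow> vfield" where
  "Eb d n = (if n = 0 then form (wpoly (int d - 2) zc) (wpoly (int d - 1) zc) (wpoly (int d) (dl 0))
     else if odd n then form (wpoly (int d - 2) zc) (wpoly (int d - 1) (dl ((n - 1) div 2))) (wpoly (int d) zc)
     else form (wpoly (int d - 2) (dl ((n - 2) div 2))) (wpoly (int d - 1) zc) (wpoly (int d) (gk d ((n - 2) div 2))))"

lemma Eb_in: "d \<ge> 1 \<Longrightarrow> Eb d n \<in> Xs d"
  unfolding Eb_def
proof (split if_split, intro conjI impI)
  assume d: "d \<ge> 1"
  show "form (wpoly (int d - 2) zc) (wpoly (int d - 1) zc) (wpoly (int d) (dl 0)) \<in> Xs d"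
    by (rule mem_X[OF d]) (simp add: zc_def dl_def)
  show "\<not> n = 0 \<Longrightarrow> (if odd n then form (wpoly (int d - 2) zc) (wpoly (int d - 1) (dl ((n - 1) div 2))) (wpoly (int d) zc)
     else form (wpoly (int d - 2) (dl ((n - 2) div 2))) (wpoly (int d - 1) zc) (wpoly (int d) (gk d ((n - 2) div 2)))) \<in> Xs d"
  proof (split if_split, intro conjI impI)
    show "form (wpoly (int d - 2) zc) (wpoly (int d - 1) (dl ((n - 1) div 2))) (wpoly (int d) zc) \<in> Xs d"
      by (rule mem_X[OF d]) (simp add: zc_def)
    show "form (wpoly (int d - 2) (dl ((n - 2) div 2))) (wpoly (int d - 1) zc) (wpoly (int d) (gk d ((n - 2) div 2))) \<in> Xs d"
    proof (rule mem_X[OF d])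
      fix k
      show "dl ((n - 2) div 2) k * (real d + 1 - real k) + 2 * (real k + 1) * gk d ((n - 2) div 2) (Suc k) = 0"
        by (cases "k = (n - 2) div 2") (simp_all add: dl_def gk_def gam_def field_simps)
    qed
  qed
qed

lemma wpoly_zc: "wpoly m zc = (\<lambda>x b. 0)"
  unfolding wpoly_def zc_def by simp

lemma wpoly_dl: "wpoly m (dl k) x b = (if k \<in> Kset m then x ^ nat (m - 2 * int k) * b ^ k else 0)"
proof -
  have "wpoly m (dl k) x b = (\<Sum>ka\<in>Kset m. if ka = k then x ^ nat (m - 2 * int k) * b ^ k else 0)"
    unfolding wpoly_def dl_def by (intro sum.cong refl) auto
  then show ?thesis by (simp add: sum.delta)
qed

lemma wpoly_gk: "wpoly m (gk d k) x b = (if Suc k \<in> Kset m then gam d k * x ^ nat (m - 2 * int (Suc k)) * b ^ Suc k else 0)"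
proof -
  have "wpoly m (gk d k) x b = (\<Sum>ka\<in>Kset m. if ka = Suc k then gam d k * x ^ nat (m - 2 * int (Suc k)) * b ^ Suc k else 0)"
    unfolding wpoly_def gk_def by (intro sum.cong refl) auto
  then show ?thesis by (simp add: sum.delta)
qed

lemma fsum_apply: "(\<Sum>i\<in>I. (f i :: vfield)) \<xi> = (\<Sum>i\<in>I. f i \<xi>)"
  by (induction I rule: infinite_finite_induct) auto

lemma Eb_eval:
  assumes n: "n \<le> d"
  shows "Eb d n (vector [1, 0, s/2]) = (if n = 0 then vector [0, 0, 1] else if odd n then vector [0, s ^ ((n - 1) div 2), 0]
     else vector [s ^ ((n - 2) div 2), 0, gam d ((n - 2) div 2) * s ^ Suc ((n - 2) div 2)])"
proof -
  have b: "beta (vector [1, 0, s/2]) = s" by (simp add: beta_def)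
  show ?thesis
  proof (cases "n = 0")
    case True
    have "0 \<in> Kset (int d)" by (simp add: Kset_def)
    then show ?thesis using True by (simp add: Eb_def form_def b wpoly_zc wpoly_dl)
  next
    case False
    show ?thesis
    proof (cases "odd n")
      case True
      then have "(n - 1) div 2 \<in> Kset (int d - 1)" using n False by (auto simp: Kset_def elim!: oddE)
      then show ?thesis using True False by (simp add: Eb_def form_def b wpoly_zc wpoly_dl)
    next
      case ev: False
      then have "(n - 2) div 2 \<in> Kset (int d - 2)" "Suc ((n - 2) div 2) \<in> Kset (int d)"
        using n False by (auto simp: Kset_def elim!: evenE)
      then show ?thesis using ev False by (simp add: Eb_def form_def b wpoly_zc wpoly_dl wpoly_gk)
    qed
  qed
qed

lemma lin_indep:
  assumes z: "(\<Sum>n\<le>d. fscale (w n) (Eb d n)) = 0"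
  shows "\<forall>n\<le>d. w n = 0"
proof -
  have ev: "(\<Sum>n\<le>d. w n *\<^sub>R Eb d n (vector [1, 0, s/2])) = 0" for s
    using fun_cong[OF z, of "vector [1, 0, s/2]"] unfolding fsum_apply fscale_def by simp
  have c1: "(\<Sum>n\<le>d. w n * (if n \<noteq> 0 \<and> even n then s ^ ((n - 2) div 2) else 0)) = 0" for s
  proof -
    have "(\<Sum>n\<le>d. w n *\<^sub>R Eb d n (vector [1, 0, s/2])) $ 1 = 0" using ev[of s] by simp
    moreover have "(\<Sum>n\<le>d. w n *\<^sub>R Eb d n (vector [1, 0, s/2])) $ 1 = (\<Sum>n\<le>d. w n * (if n \<noteq> 0 \<and> even n then s ^ ((n - 2) div 2) else 0))"
      unfolding sum_component by (intro sum.cong refl) (simp add: Eb_eval)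
    ultimately show ?thesis by simp
  qed
  have c2: "(\<Sum>n\<le>d. w n * (if odd n then s ^ ((n - 1) div 2) else 0)) = 0" for s
  proof -
    have "(\<Sum>n\<le>d. w n *\<^sub>R Eb d n (vector [1, 0, s/2])) $ 2 = 0" using ev[of s] by simp
    moreover have "(\<Sum>n\<le>d. w n *\<^sub>R Eb d n (vector [1, 0, s/2])) $ 2 = (\<Sum>n\<le>d. w n * (if odd n then s ^ ((n - 1) div 2) else 0))"
      unfolding sum_component by (intro sum.cong refl) (simp add: Eb_eval)
    ultimately show ?thesis by simp
  qed
  have c3: "(\<Sum>n\<le>d. w n * (if n = 0 then 1 else 0)) = 0"
  proof -
    have "(\<Sum>n\<le>d. w n *\<^sub>R Eb d n (vector [1, 0, 0])) $ 3 = 0" using ev[of 0] by simp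
    moreover have E0: "Eb d n (vector [1, 0, 0]) $ 3 = (if n = 0 then 1 else 0)" if "n \<le> d" for n
    proof -
      have eq: "Eb d n (vector [1, 0, 0]) = (if n = 0 then vector [0, 0, 1] else if odd n then vector [0, 0 ^ ((n - 1) div 2), 0]
         else vector [0 ^ ((n - 2) div 2), 0, gam d ((n - 2) div 2) * 0 ^ Suc ((n - 2) div 2)])"
        using Eb_eval[OF that, of 0] unfolding div_0 .
      show ?thesis
      proof (cases "n = 0")
        case True then show ?thesis using eq by simp
      next
        case False then show ?thesis using eq by (cases "odd n") simp_all
      qed
    qed
    moreover have "(\<Sum>n\<le>d. w n *\<^sub>R Eb d n (vector [1, 0, 0])) $ 3 = (\<Sum>n\<le>d. w n * (if n = 0 then 1 else 0))"
      unfolding sum_component by (intro sum.cong refl) (simp add: E0)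
    ultimately show ?thesis by simp
  qed
  have we: "w n = 0" if "n \<le> d" "n \<noteq> 0" "even n" for n
  proof (rule coeff_ext_inj[where K="{n. n \<le> d \<and> n \<noteq> 0 \<and> even n}" and e="\<lambda>n. (n - 2) div 2"])
    show "inj_on (\<lambda>n. (n - 2) div 2) {n. n \<le> d \<and> n \<noteq> 0 \<and> even n}"
      by (auto simp: inj_on_def elim!: evenE)
    fix u :: real
    have "(\<Sum>n\<in>{n. n \<le> d \<and> n \<noteq> 0 \<and> even n}. w n * u ^ ((n - 2) div 2)) = (\<Sum>n\<le>d. w n * (if n \<noteq> 0 \<and> even n then u ^ ((n - 2) div 2) else 0))"
      by (simp add: sum.inter_filter[symmetric] if_distrib cong: if_cong)
    then show "(\<Sum>n\<in>{n. n \<le> d \<and> n \<noteq> 0 \<and> even n}. w n * u ^ ((n - 2) div 2)) = 0" using c1 by simp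
  qed (use that in auto)
  have wo: "w n = 0" if "n \<le> d" "odd n" for n
  proof (rule coeff_ext_inj[where K="{n. n \<le> d \<and> odd n}" and e="\<lambda>n. (n - 1) div 2"])
    show "inj_on (\<lambda>n. (n - 1) div 2) {n. n \<le> d \<and> odd n}"
      by (auto simp: inj_on_def elim!: oddE)
    fix u :: real
    have "(\<Sum>n\<in>{n. n \<le> d \<and> odd n}. w n * u ^ ((n - 1) div 2)) = (\<Sum>n\<le>d. w n * (if odd n then u ^ ((n - 1) div 2) else 0))"
      by (simp add: sum.inter_filter[symmetric] if_distrib cong: if_cong)
    then show "(\<Sum>n\<in>{n. n \<le> d \<and> odd n}. w n * u ^ ((n - 1) div 2)) = 0" using c2 by simp
  qed (use that in auto)
  have w0: "w 0 = 0"
  proof -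
    have e1: "(\<Sum>n\<le>d. w n * (if n = 0 then 1 else 0)) = w 0 * (if (0::nat) = 0 then 1 else 0) + (\<Sum>n\<in>{..d} - {0}. w n * (if n = 0 then 1 else 0))"
      by (rule sum.remove) auto
    have e2: "(\<Sum>n\<in>{..d} - {0}. w n * (if n = 0 then 1 else (0::real))) = 0"
      by (rule sum.neutral) auto
    have "w 0 * (if (0::nat) = 0 then 1 else 0) = 0" using c3 unfolding e1 e2 by simp
    then show ?thesis by simp
  qed
  show ?thesis
  proof (intro allI impI)
    fix n assume n: "n \<le> d"
    show "w n = 0"
    proof (cases "n = 0")
      case True then show ?thesis using w0 by simp
    next
      case False
      show ?thesis
      proof (cases "even n")
        case True then show ?thesis using we[OF n False] by simp
      next
        case odd: False then show ?thesis using wo[OF n] by simp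
      qed
    qed
  qed
qed


lemma Eb_0: "Eb d 0 = form (\<lambda>x b. 0) (\<lambda>x b. 0) (wpoly (int d) (dl 0))"
  by (simp add: Eb_def wpoly_zc)
lemma Eb_odd: "Eb d (2*k+1) = form (\<lambda>x b. 0) (wpoly (int d - 1) (dl k)) (\<lambda>x b. 0)"
  by (simp add: Eb_def wpoly_zc)
lemma Eb_even: "Eb d (2*k+2) = form (wpoly (int d - 2) (dl k)) (\<lambda>x b. 0) (wpoly (int d) (gk d k))"
  by (simp add: Eb_def wpoly_zc)

lemma vsum3: "(\<Sum>k\<in>I. c k *\<^sub>R (vector [f1 k, f2 k, f3 k] :: vec3)) = vector [\<Sum>k\<in>I. c k * f1 k, \<Sum>k\<in>I. c k * f2 k, \<Sum>k\<in>I. c k * f3 k]"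
  unfolding vec_eq_iff forall_3 by simp

lemma wpoly_decomp: "wpoly m c x b = (\<Sum>k\<in>Kset m. c k * wpoly m (dl k) x b)"
proof -
  have "(\<Sum>k\<in>Kset m. c k * wpoly m (dl k) x b) = (\<Sum>k\<in>Kset m. c k * x ^ nat (m - 2 * int k) * b ^ k)"
    by (intro sum.cong refl) (simp add: wpoly_dl)
  then show ?thesis by (simp add: wpoly_def)
qed

context Xel begin

definition "ca k = A k / 2^k"
definition "cd k = D k / 2^k"
definition "cb k = B k / 2^k"

lemma psi3_decomp: "\<psi>3 x b = cb 0 * wpoly (int d) (dl 0) x b + (\<Sum>k\<in>Kset (int d - 2). ca k * wpoly (int d) (gk d k) x b)"
proof -
  have z: "0 \<in> Kset (int d)" by (simp add: Kset_def)
  have "\<psi>3 x b = cb 0 * x ^ nat (int d) + (\<Sum>k\<in>Kset (int d) - {0}. cb k * x ^ nat (int d - 2 * int k) * b ^ k)"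
    unfolding \<psi>3_def wpoly_def cb_def[symmetric] by (subst sum.remove[OF finite_Kset z]) simp
  also have "(\<Sum>k\<in>Kset (int d) - {0}. cb k * x ^ nat (int d - 2 * int k) * b ^ k)
      = (\<Sum>j\<in>Kset (int d - 2). cb (Suc j) * x ^ nat (int d - 2 * int (Suc j)) * b ^ Suc j)"
    unfolding Kset_shift by (subst sum.reindex) auto
  also have "\<dots> = (\<Sum>k\<in>Kset (int d - 2). ca k * wpoly (int d) (gk d k) x b)"
  proof (intro sum.cong refl)
    fix j assume j: "j \<in> Kset (int d - 2)"
    then have jd: "j \<le> d" and sj: "Suc j \<in> Kset (int d)" unfolding Kset_def by auto
    have r: "A j * (real d - real j + 1) + (real j + 1) * B (Suc j) = 0" by (rule div_rel[OF jd])
    have "cb (Suc j) = ca j * gam d j"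
    proof -
      have r': "(real j + 1) * B (Suc j) = - (A j * (real d - real j + 1))" using r by linarith
      have bs: "B (Suc j) = - (A j * (real d - real j + 1)) / (real j + 1)"
        using r' by (simp add: eq_divide_eq algebra_simps)
      show ?thesis unfolding cb_def ca_def gam_def bs by (simp add: field_simps)
    qed
    then show "cb (Suc j) * x ^ nat (int d - 2 * int (Suc j)) * b ^ Suc j = ca j * wpoly (int d) (gk d j) x b"
      using sj by (simp add: wpoly_gk)
  qed
  finally show ?thesis using z by (simp add: wpoly_dl)
qed

lemma h_decomp:
  "h = fscale (cb 0) (Eb d 0) + (\<Sum>k\<in>Kset (int d - 1). fscale (cd k) (Eb d (2*k+1)))
        + (\<Sum>k\<in>Kset (int d - 2). fscale (ca k) (Eb d (2*k+2)))"
proof (rule ext)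
  fix \<xi> :: vec3
  define x where "x = \<xi>$1" define y where "y = \<xi>$2" define \<beta> where "\<beta> = beta \<xi>"
  have p1: "\<psi>1 x \<beta> = (\<Sum>k\<in>Kset (int d - 2). ca k * wpoly (int d - 2) (dl k) x \<beta>)"
    unfolding \<psi>1_def ca_def by (rule wpoly_decomp)
  have p2: "\<psi>2 x \<beta> = (\<Sum>k\<in>Kset (int d - 1). cd k * wpoly (int d - 1) (dl k) x \<beta>)"
    unfolding \<psi>2_def cd_def by (rule wpoly_decomp)
  have "(fscale (cb 0) (Eb d 0) + (\<Sum>k\<in>Kset (int d - 1). fscale (cd k) (Eb d (2*k+1)))
        + (\<Sum>k\<in>Kset (int d - 2). fscale (ca k) (Eb d (2*k+2)))) \<xi>
     = cb 0 *\<^sub>R vector [0, 0, wpoly (int d) (dl 0) x \<beta>]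
       + (\<Sum>k\<in>Kset (int d - 1). cd k *\<^sub>R vector [0, x * wpoly (int d - 1) (dl k) x \<beta>, y * wpoly (int d - 1) (dl k) x \<beta>])
       + (\<Sum>k\<in>Kset (int d - 2). ca k *\<^sub>R vector [x^2 * wpoly (int d - 2) (dl k) x \<beta>, x * y * wpoly (int d - 2) (dl k) x \<beta>,
            1/2 * y^2 * wpoly (int d - 2) (dl k) x \<beta> + wpoly (int d) (gk d k) x \<beta>])"
    unfolding fsum_apply fscale_def plus_fun_apply Eb_0 Eb_odd Eb_even form_def x_def y_def \<beta>_def
    by simp
  also have "\<dots> = form \<psi>1 \<psi>2 \<psi>3 \<xi>"
    unfolding vsum3 form_def x_def[symmetric] y_def[symmetric] \<beta>_def[symmetric] p1 p2 psi3_decomp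
    unfolding vec_eq_iff forall_3
    by (simp add: sum_distrib_left sum.distrib algebra_simps)
  finally show "h \<xi> = (fscale (cb 0) (Eb d 0) + (\<Sum>k\<in>Kset (int d - 1). fscale (cd k) (Eb d (2*k+1)))
        + (\<Sum>k\<in>Kset (int d - 2). fscale (ca k) (Eb d (2*k+2)))) \<xi>"
    using rep_all by simp
qed

end

lemma vs_fscale: "vector_space fscale"
  by unfold_locales (auto simp: fscale_def fun_eq_iff scaleR_add_right scaleR_add_left)

lemma Eb_inj: "inj_on (Eb d) {..d}"
proof (rule inj_onI, rule ccontr)
  fix n m assume n: "n \<in> {..d}" and m: "m \<in> {..d}" and eq: "Eb d n = Eb d m" and nm: "n \<noteq> m"
  define w where "w i = (if i = n then 1 else if i = m then -1 else (0::real))" for i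
  have "(\<Sum>i\<le>d. fscale (w i) (Eb d i)) = (\<Sum>i\<in>{n, m}. fscale (w i) (Eb d i))"
    by (rule sum.mono_neutral_right) (use n m in \<open>auto simp: w_def fscale_def fun_eq_iff\<close>)
  also have "\<dots> = fscale 1 (Eb d n) + fscale (-1) (Eb d m)" using nm by (simp add: w_def)
  also have "\<dots> = 0" using eq by (simp add: fscale_def fun_eq_iff)
  finally have "\<forall>i\<le>d. w i = 0" by (rule lin_indep)
  then have "w n = 0" using n by simp
  then show False by (simp add: w_def)
qed

lemma dimX:
  assumes d: "d \<ge> 1"
  shows "vector_space.dim fscale (Xs d) = d + 1"
proof -
  interpret vs: vector_space fscale by (rule vs_fscale)
  let ?B = "Eb d ` {..d}"
  have indep: "vs.independent ?B"
  proof
    assume "vs.dependent ?B"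
    then obtain u where u: "\<exists>v\<in>?B. u v \<noteq> 0" and s: "(\<Sum>v\<in>?B. fscale (u v) v) = 0"
      using vs.dependent_finite[of ?B] by auto
    have "(\<Sum>n\<le>d. fscale (u (Eb d n)) (Eb d n)) = 0"
      using s by (simp add: sum.reindex[OF Eb_inj])
    then have "\<forall>n\<le>d. u (Eb d n) = 0" by (rule lin_indep)
    then show False using u by auto
  qed
  have BX: "?B \<subseteq> Xs d" using Eb_in[OF d] by auto
  have XB: "Xs d \<subseteq> vs.span ?B"
  proof
    fix h assume h: "h \<in> Xs d"
    have e: "h = fscale (Xel.cb d h 0) (Eb d 0) + (\<Sum>k\<in>Kset (int d - 1). fscale (Xel.cd d h k) (Eb d (2*k+1)))
        + (\<Sum>k\<in>Kset (int d - 2). fscale (Xel.ca d h k) (Eb d (2*k+2)))"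
      by (rule Xel.h_decomp[OF X_Xel[OF d h]])
    have m0: "Eb d 0 \<in> vs.span ?B" by (rule vs.span_base) auto
    have m1: "Eb d (2*k+1) \<in> vs.span ?B" if "k \<in> Kset (int d - 1)" for k
      by (rule vs.span_base) (use that in \<open>auto simp: Kset_def\<close>)
    have m2: "Eb d (2*k+2) \<in> vs.span ?B" if "k \<in> Kset (int d - 2)" for k
      by (rule vs.span_base) (use that in \<open>auto simp: Kset_def\<close>)
    show "h \<in> vs.span ?B"
      by (subst e) (intro vs.span_add vs.span_scale vs.span_sum m0 m1 m2; assumption)
  qed
  have sp: "vs.span ?B = vs.span (Xs d)"
    unfolding vs.span_eq using BX XB vs.span_superset by blast
  have "vs.dim (Xs d) = card ?B" by (rule vs.dim_eq_card[OF sp indep])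
  also have "\<dots> = d + 1" using card_image[OF Eb_inj] by simp
  finally show ?thesis .
qed

theorem lemma8:
  fixes d :: nat
  assumes "d \<ge> 1"
  shows "{h \<in> F3 d. ad (transpose Nmat) h = (\<lambda>_. 0)} \<inter> V3 d =
           {h. \<exists>\<psi>1 \<psi>2 \<psi>3.
               whom_poly (int d - 2) \<psi>1 \<and> whom_poly (int d - 1) \<psi>2 \<and> whom_poly (int d) \<psi>3 \<and>
               (\<forall>x b. - 2 * deriv (\<lambda>t. \<psi>3 x t) b =
                   x * deriv (\<lambda>t. \<psi>1 t b) x + 3 * \<psi>1 x b + b * deriv (\<lambda>t. \<psi>1 x t) b) \<and>
               (\<forall>\<xi>. let x = \<xi>$1; y = \<xi>$2; p1 = \<psi>1 x (beta \<xi>); p2 = \<psi>2 x (beta \<xi>);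
                         p3 = \<psi>3 x (beta \<xi>) in
                  h \<xi> = vector [x^2 * p1, x * y * p1 + x * p2, (1/2) * y^2 * p1 + y * p2 + p3])}
       \<and> vector_space.dim fscale ({h \<in> F3 d. ad (transpose Nmat) h = (\<lambda>_. 0)} \<inter> V3 d) = d + 1"
  using seteq[OF assms] dimX[OF assms] unfolding Xs_def by simp


end
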